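(* Let $d=2$, $r\neq0$ and $h(\mathbf{y})=h_1(y_1)h_2(y_2)$ with $h_1,h_2\in\mathcal{S}(\mathbb{R})$. Let $\psi(\mathbf{w})=\int_{\mathbb{R}^2}h(\mathbf{y})\mathcal{F}_\kappa[(|\mathbf{w}\cdot\mathbf{y}|-|\kappa|)^+](r)d\mathbf{y}$ and $\theta:=\psi-\lim_{|\mathbf{w}|\to\infty}\psi(\mathbf{w})$. Then $\theta\in\mathcal{S}_e^{\rm sep}$ and, with $g(\mathbf{w}):=\frac{2}{r^2}\int_{\mathbb{R}^2}h(\mathbf{y})\cos(r\mathbf{w}\cdot\mathbf{y})d\mathbf{y}$, $$T^2(\theta)-\theta(\mathbf0)=\frac{2}{r^2}\int_{\mathbb{R}^2}h(\mathbf{y})d\mathbf{y}-\frac{1}{4\pi^2}\mathrm{PV}\!\!\int\Big(\frac{dw_1}{w_1+1}+\frac{dw_1}{w_1-1}\Big)\mathrm{PV}\!\!\int\Big(\frac{dw_2}{w_2+w_1}-\frac{dw_2}{w_2-w_1}\Big)g(\mathbf{w})$$ $$\qquad-\frac{1}{4\pi^2}\mathrm{PV}\!\!\int\Big(\frac{dw_2}{w_2+1}+\frac{dw_2}{w_2-1}\Big)\mathrm{PV}\!\!\int\Big(\frac{dw_1}{w_1+w_2}-\frac{dw_1}{w_1-w_2}\Big)g(\mathbf{w}).$$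
   Context: $\mathcal{F}_\kappa[u(\kappa)](r)=\int_{\mathbb{R}}u(\kappa)e^{-ir\kappa}d\kappa$. Cauchy principal value: $\mathrm{PV}\!\int\frac{g(w)}{w-c}dw=\lim_{\epsilon\to0+}\int_{|w-c|>\epsilon}\frac{g(w)}{w-c}dw$, and sums of such symbols act by linearity, e.g. $\mathrm{PV}\!\int(\frac{dw_1}{w_1+1}+\frac{dw_1}{w_1-1})\mathrm{PV}\!\int(\frac{dw_2}{w_2+w_1}-\frac{dw_2}{w_2-w_1})g$ means $\sum_{c,\varepsilon\in\{\pm1\}}\varepsilon\,\mathrm{PV}\!\int\frac{dw_1}{w_1+c}\big(\mathrm{PV}\!\int\frac{g(w_1,w_2)}{w_2+\varepsilon w_1}dw_2\big)$. $\mathcal{S}_e^{\rm sep}$ is the linear span of functions $\varphi(\mathbf{w})+\varphi(-\mathbf{w})$ with $\varphi(\mathbf{w})=\varphi_1(w_1)\varphi_2(w_2)$, $\varphi_i\in\mathcal{S}(\mathbb{R})$. $T^2$ is the linear form on $\mathcal{S}_e^{\rm sep}$ $$T^2(\theta)=\frac{1}{4\pi^2}\mathrm{PV}\!\!\int\Big(\frac{dw_1}{w_1+1}+\frac{dw_1}{w_1-1}\Big)\mathrm{PV}\!\!\int\Big(\frac{dw_2}{w_2+w_1}-\frac{dw_2}{w_2-w_1}\Big)\theta(\mathbf{w})+\frac{1}{4\pi^2}\mathrm{PV}\!\!\int\Big(\frac{dw_2}{w_2+1}+\frac{dw_2}{w_2-1}\Big)\mathrm{PV}\!\!\int\Big(\frac{dw_1}{w_1+w_2}-\frac{dw_1}{w_1-w_2}\Big)\theta(\mathbf{w}),$$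 defined first on separable products and extended by linearity. *)

theory Defs
  imports "HOL-Analysis.Analysis"
begin

definition vderiv :: "(real \<Rightarrow> complex) \<Rightarrow> real \<Rightarrow> complex" where
  "vderiv f = (\<lambda>x. vector_derivative f (at x))"

definition schwartz :: "(real \<Rightarrow> complex) \<Rightarrow> bool" where
  "schwartz f \<longleftrightarrow>
     (\<forall>n x. ((vderiv ^^ n) f) differentiable (at x)) \<and>
     (\<forall>m n. bounded (range (\<lambda>x. (x ^ m) *\<^sub>R ((vderiv ^^ n) f x))))"

definition fourier :: "(real \<Rightarrow> complex) \<Rightarrow> real \<Rightarrow> complex" where
  "fourier u r = (LINT \<kappa>|lborel. u \<kappa> * cis (- (r * \<kappa>)))"

definition PV :: "real \<Rightarrow> (real \<Rightarrow> complex) \<Rightarrow> complex" where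
  "PV c g = Lim (at_right 0)
     (\<lambda>\<epsilon>::real. LINT w:{w. \<epsilon> < \<bar>w - c\<bar>}|lborel. g w / complex_of_real (w - c))"

definition Se_sep :: "(real \<times> real \<Rightarrow> complex) set" where
  "Se_sep = {\<theta>. \<exists>(n::nat) (c::nat \<Rightarrow> complex) \<phi>1 \<phi>2.
      (\<forall>i<n. schwartz (\<phi>1 i) \<and> schwartz (\<phi>2 i)) \<and>
      \<theta> = (\<lambda>w. \<Sum>i<n. c i * (\<phi>1 i (fst w) * \<phi>2 i (snd w)
                               + \<phi>1 i (- fst w) * \<phi>2 i (- snd w)))}"

text \<open>The iterated principal-value form T^2 (the formula of the paper, applied
  to the function directly; on S_e^sep this is the linear extension).
  Note 1/(w+a) = 1/(w-(-a)).\<close>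
definition T2 :: "(real \<times> real \<Rightarrow> complex) \<Rightarrow> complex" where
  "T2 \<theta> = complex_of_real (1 / (4 * pi\<^sup>2)) *
     ( (PV (-1) (\<lambda>w1. PV (- w1) (\<lambda>w2. \<theta> (w1, w2)) - PV w1 (\<lambda>w2. \<theta> (w1, w2)))
      + PV 1 (\<lambda>w1. PV (- w1) (\<lambda>w2. \<theta> (w1, w2)) - PV w1 (\<lambda>w2. \<theta> (w1, w2))))
     + (PV (-1) (\<lambda>w2. PV (- w2) (\<lambda>w1. \<theta> (w1, w2)) - PV w2 (\<lambda>w1. \<theta> (w1, w2)))
      + PV 1 (\<lambda>w2. PV (- w2) (\<lambda>w1. \<theta> (w1, w2)) - PV w2 (\<lambda>w1. \<theta> (w1, w2)))))"

end

theory Submission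
  imports Defs "HOL-Probability.Sinc_Integral" "HOL-Probability.Characteristic_Functions" "HOL-Real_Asymp.Real_Asymp"
begin


definition rd :: "(real \<Rightarrow> complex) \<Rightarrow> bool" where
  "rd f \<longleftrightarrow> (\<forall>m. \<exists>C. \<forall>x. norm (x ^ m *\<^sub>R f x) \<le> C)"

lemma schwartz_iff:
  "schwartz f \<longleftrightarrow> (\<forall>n x. (vderiv ^^ n) f differentiable (at x)) \<and> (\<forall>n. rd ((vderiv ^^ n) f))"
  unfolding schwartz_def rd_def bounded_iff by auto

lemma vderiv_iter:
  assumes "H 0 = G" "\<And>n x. (H n has_vector_derivative H (Suc n) x) (at x)"
  shows "(vderiv ^^ n) G = H n"
proof (induction n)
  case 0 then show ?case using assms by simp
next
  case (Suc n)
  have "(vderiv ^^ Suc n) G = vderiv (H n)" using Suc by simp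
  also have "\<dots> = H (Suc n)" unfolding vderiv_def
    using vector_derivative_at[OF assms(2)] by auto
  finally show ?case .
qed

lemma schwartzI:
  assumes "H 0 = G" "\<And>n x. (H n has_vector_derivative H (Suc n) x) (at x)" "\<And>n. rd (H n)"
  shows "schwartz G"
  unfolding schwartz_iff vderiv_iter[of H G, OF assms(1,2)]
  using assms(2,3) differentiableI_vector by blast

lemma schwartz_D:
  assumes "schwartz f"
  shows "((vderiv ^^ n) f has_vector_derivative (vderiv ^^ Suc n) f x) (at x)"
  using assms unfolding schwartz_iff
  by (auto simp: vderiv_def vector_derivative_works)

lemma schwartz_D2:
  assumes "schwartz f"
  shows "((vderiv ^^ n) f has_vector_derivative vderiv ((vderiv ^^ n) f) x) (at x)"
  using schwartz_D[OF assms, of n x] by simp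

lemma schwartz_rd: "schwartz f \<Longrightarrow> rd ((vderiv ^^ n) f)"
  unfolding schwartz_iff by auto

lemma schwartz_cont: "schwartz f \<Longrightarrow> continuous_on UNIV ((vderiv ^^ n) f)"
  by (meson continuous_at_imp_continuous_on differentiable_imp_continuous_within schwartz_iff)

lemma schwartz_vderiv: "schwartz f \<Longrightarrow> schwartz (vderiv f)"
proof -
  have e: "\<And>n. (vderiv ^^ n) (vderiv f) = (vderiv ^^ Suc n) f"
    by (simp only: funpow_Suc_right o_apply)
  show "schwartz f \<Longrightarrow> schwartz (vderiv f)" unfolding schwartz_iff e by blast
qed

lemma schwartz_vderivs: "schwartz f \<Longrightarrow> schwartz ((vderiv ^^ n) f)"
  by (induction n) (auto intro: schwartz_vderiv)

lemma rd_add: "rd f \<Longrightarrow> rd g \<Longrightarrow> rd (\<lambda>x. f x + g x)"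
  unfolding rd_def
proof safe
  fix m assume "\<forall>m. \<exists>C. \<forall>x. norm (x ^ m *\<^sub>R f x) \<le> C" "\<forall>m. \<exists>C. \<forall>x. norm (x ^ m *\<^sub>R g x) \<le> C"
  then obtain C D where "\<forall>x. norm (x ^ m *\<^sub>R f x) \<le> C" "\<forall>x. norm (x ^ m *\<^sub>R g x) \<le> D" by blast
  then show "\<exists>C. \<forall>x. norm (x ^ m *\<^sub>R (f x + g x)) \<le> C"
    by (intro exI[of _ "C + D"]) (metis add_mono norm_triangle_ineq order_trans scaleR_right_distrib)
qed

lemma rd_cmult: "rd f \<Longrightarrow> rd (\<lambda>x. c * f x)"
  unfolding rd_def
proof safe
  fix m assume "\<forall>m. \<exists>C. \<forall>x. norm (x ^ m *\<^sub>R f x) \<le> C"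
  then obtain C where C: "\<forall>x. norm (x ^ m *\<^sub>R f x) \<le> C" by blast
  show "\<exists>C. \<forall>x. norm (x ^ m *\<^sub>R (c * f x)) \<le> C"
  proof (intro exI allI)
    fix x
    have "norm (x ^ m *\<^sub>R (c * f x)) = norm c * norm (x ^ m *\<^sub>R f x)"
      by (simp add: norm_mult)
    also have "\<dots> \<le> norm c * C" using C by (simp add: mult_left_mono)
    finally show "norm (x ^ m *\<^sub>R (c * f x)) \<le> norm c * C" .
  qed
qed

lemma rd_xmult: "rd f \<Longrightarrow> rd (\<lambda>x. complex_of_real x * f x)"
  unfolding rd_def
proof safe
  fix m assume "\<forall>m. \<exists>C. \<forall>x. norm (x ^ m *\<^sub>R f x) \<le> C"
  then obtain C where C: "\<forall>x. norm (x ^ Suc m *\<^sub>R f x) \<le> C" by blast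
  show "\<exists>C. \<forall>x. norm (x ^ m *\<^sub>R (complex_of_real x * f x)) \<le> C"
    using C by (intro exI[of _ C]) (auto simp: norm_mult abs_mult mult_ac)
qed

lemma rd_xpow: "rd f \<Longrightarrow> rd (\<lambda>x. complex_of_real x ^ k * f x)"
proof (induction k)
  case 0 then show ?case by simp
next
  case (Suc k)
  from rd_xmult[OF Suc.IH[OF Suc.prems]] show ?case by (simp add: mult.assoc)
qed

lemma rd_bound: assumes "rd f" shows "\<exists>C. \<forall>x. norm (f x) \<le> C * inverse (1 + x\<^sup>2)"
proof -
  obtain A where A: "\<forall>x. norm (x ^ 0 *\<^sub>R f x) \<le> A" using assms unfolding rd_def by blast
  obtain B where B: "\<forall>x. norm (x ^ 2 *\<^sub>R f x) \<le> B" using assms unfolding rd_def by blast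
  show ?thesis
  proof (intro exI allI)
    fix x
    have "(1 + x\<^sup>2) * norm (f x) = norm (x ^ 0 *\<^sub>R f x) + norm (x ^ 2 *\<^sub>R f x)"
      by (simp add: algebra_simps)
    also have "\<dots> \<le> A + B" using A B by (intro add_mono) auto
    finally have "(1 + x\<^sup>2) * norm (f x) \<le> A + B" .
    moreover have "0 < 1 + x\<^sup>2" by (simp add: add_pos_nonneg)
    ultimately show "norm (f x) \<le> (A + B) * inverse (1 + x\<^sup>2)"
      by (simp add: field_simps)
  qed
qed

lemma integrable_inv_sq: "integrable lborel (\<lambda>x::real. inverse (1 + x\<^sup>2))"
  using integrable_inverse_1_plus_square by (simp add: set_integrable_def)

lemma rd_integrable:
  assumes "rd f" "continuous_on UNIV f"
  shows "integrable lborel f"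
proof -
  obtain C where C: "\<forall>x. norm (f x) \<le> C * inverse (1 + x\<^sup>2)" using rd_bound[OF assms(1)] by blast
  show ?thesis
  proof (rule Bochner_Integration.integrable_bound[where f="\<lambda>x::real. C * inverse (1 + x\<^sup>2)"])
    show "integrable lborel (\<lambda>x. C * inverse (1 + x\<^sup>2))" using integrable_inv_sq by simp
    show "f \<in> borel_measurable lborel" using assms(2) borel_measurable_continuous_onI by simp
    show "AE x in lborel. norm (f x) \<le> norm (C * inverse (1 + x\<^sup>2))"
    proof (intro AE_I2)
      fix x have "norm (f x) \<le> C * inverse (1 + x\<^sup>2)" using C by blast
      then show "norm (f x) \<le> norm (C * inverse (1 + x\<^sup>2))"
        using abs_ge_self order_trans by (metis real_norm_def)
    qed
  qed
qed

lemma rd_bounded: assumes "rd f" shows "\<exists>C. \<forall>x. norm (f x) \<le> C"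
  using assms unfolding rd_def by (metis power_0 scaleR_one)


lemma schwartz_cmult: assumes "schwartz f" shows "schwartz (\<lambda>x. c * f x)"
  by (rule schwartzI[where H="\<lambda>n x. c * (vderiv ^^ n) f x"])
     (auto intro!: has_vector_derivative_mult_right schwartz_D2[OF assms] rd_cmult schwartz_rd[OF assms])

lemma schwartz_add: assumes "schwartz f" "schwartz g" shows "schwartz (\<lambda>x. f x + g x)"
  by (rule schwartzI[where H="\<lambda>n x. (vderiv ^^ n) f x + (vderiv ^^ n) g x"])
     (auto intro!: has_vector_derivative_add schwartz_D2 assms rd_add schwartz_rd)

lemma has_vd_ofreal: "((\<lambda>x. complex_of_real x) has_vector_derivative 1) (at x)"
  using has_vector_derivative_of_real[OF DERIV_ident] by simp

lemma schwartz_xmult: assumes "schwartz f" shows "schwartz (\<lambda>x. complex_of_real x * f x)"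
proof (rule schwartzI[where H="\<lambda>n x. complex_of_real x * (vderiv ^^ n) f x + of_nat n * (vderiv ^^ (n - 1)) f x"])
  show "(\<lambda>x. complex_of_real x * (vderiv ^^ 0) f x + of_nat 0 * (vderiv ^^ (0 - 1)) f x) = (\<lambda>x. complex_of_real x * f x)"
    by simp
  fix n :: nat and x :: real
  have d1: "((\<lambda>x. complex_of_real x * (vderiv ^^ n) f x) has_vector_derivative
      (complex_of_real x * (vderiv ^^ Suc n) f x + 1 * (vderiv ^^ n) f x)) (at x)"
    by (rule has_vector_derivative_mult[OF has_vd_ofreal schwartz_D[OF assms]])
  have d2: "((\<lambda>x. of_nat n * (vderiv ^^ (n - 1)) f x) has_vector_derivative
      of_nat n * (vderiv ^^ n) f x) (at x)"
  proof (cases n)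
    case 0 then show ?thesis by simp
  next
    case (Suc k) then show ?thesis
      using has_vector_derivative_mult_right[OF schwartz_D[OF assms, of k x]] by simp
  qed
  show "((\<lambda>x. complex_of_real x * (vderiv ^^ n) f x + of_nat n * (vderiv ^^ (n - 1)) f x) has_vector_derivative
     complex_of_real x * (vderiv ^^ Suc n) f x + of_nat (Suc n) * (vderiv ^^ (Suc n - 1)) f x) (at x)"
    using has_vector_derivative_add[OF d1 d2] by (simp add: algebra_simps)
next
  fix n
  show "rd (\<lambda>x. complex_of_real x * (vderiv ^^ n) f x + of_nat n * (vderiv ^^ (n - 1)) f x)"
    by (intro rd_add rd_xmult rd_cmult schwartz_rd[OF assms])
qed

lemma rd_scale: assumes "rd f" "r \<noteq> 0" shows "rd (\<lambda>x. f (r * x))"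
  unfolding rd_def
proof
  fix m
  obtain C where C: "\<forall>x. norm (x ^ m *\<^sub>R f x) \<le> C" using assms(1) unfolding rd_def by blast
  show "\<exists>C. \<forall>x. norm (x ^ m *\<^sub>R f (r * x)) \<le> C"
  proof (intro exI allI)
    fix x
    have "norm (x ^ m *\<^sub>R f (r * x)) * \<bar>r\<bar> ^ m = norm ((r * x) ^ m *\<^sub>R f (r * x))"
      by (simp add: power_mult_distrib abs_mult power_abs)
    also have "\<dots> \<le> C" using C by blast
    finally have "norm (x ^ m *\<^sub>R f (r * x)) * \<bar>r\<bar> ^ m \<le> C" .
    moreover have "0 < \<bar>r\<bar> ^ m" using assms(2) by simp
    ultimately show "norm (x ^ m *\<^sub>R f (r * x)) \<le> C / \<bar>r\<bar> ^ m"
      by (simp add: field_simps)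
  qed
qed

lemma schwartz_scale: assumes "schwartz f" "r \<noteq> 0" shows "schwartz (\<lambda>x. f (r * x))"
proof (rule schwartzI[where H="\<lambda>n x. complex_of_real r ^ n * (vderiv ^^ n) f (r * x)"])
  fix n x
  have dr: "((\<lambda>x. r * x) has_vector_derivative r) (at x)"
    using has_real_derivative_iff_has_vector_derivative DERIV_cmult_Id by blast
  have "(((vderiv ^^ n) f \<circ> (\<lambda>x. r * x)) has_vector_derivative (r *\<^sub>R (vderiv ^^ Suc n) f (r * x))) (at x)"
    by (rule vector_diff_chain_at[OF dr schwartz_D[OF assms(1)]])
  from has_vector_derivative_mult_right[OF this, of "complex_of_real r ^ n"]
  show "((\<lambda>x. complex_of_real r ^ n * (vderiv ^^ n) f (r * x)) has_vector_derivative
         complex_of_real r ^ Suc n * (vderiv ^^ Suc n) f (r * x)) (at x)"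
    by (simp add: o_def scaleR_conv_of_real mult_ac)
next
  fix n show "rd (\<lambda>x. complex_of_real r ^ n * (vderiv ^^ n) f (r * x))"
    by (intro rd_cmult rd_scale[OF _ assms(2)] schwartz_rd[OF assms(1)])
qed simp

lemma schwartz_xpow: assumes "schwartz f" shows "schwartz (\<lambda>x. complex_of_real x ^ k * f x)"
proof (induction k)
  case 0 then show ?case using assms by simp
next
  case (Suc k) from schwartz_xmult[OF this] show ?case by (simp add: mult.assoc)
qed

lemma schwartz_integrable: "schwartz f \<Longrightarrow> integrable lborel ((vderiv ^^ n) f)"
  by (intro rd_integrable schwartz_rd schwartz_cont)

lemma schwartz_integrable0: "schwartz f \<Longrightarrow> integrable lborel f"
  using schwartz_integrable[of f 0] by simp

lemma schwartz_measurable: "schwartz f \<Longrightarrow> f \<in> borel_measurable borel"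
  using schwartz_cont[of f 0] borel_measurable_continuous_onI by simp


lemma vd_quot:
  fixes f :: "real \<Rightarrow> 'a::real_normed_vector"
  assumes "((\<lambda>h. (f (x + h) - f x) /\<^sub>R h) \<longlongrightarrow> D) (at 0)"
  shows "(f has_vector_derivative D) (at x)"
proof -
  have "((\<lambda>h. norm ((f (x + h) - f x) /\<^sub>R h - D)) \<longlongrightarrow> 0) (at 0)"
    using assms tendsto_norm_zero_iff[of "\<lambda>h. (f (x + h) - f x) /\<^sub>R h - D"] 
    by (simp add: Lim_null[symmetric])
  then have "((\<lambda>h. norm (f (x + h) - f x - h *\<^sub>R D) / norm h) \<longlongrightarrow> 0) (at 0)"
  proof (rule Lim_transform_eventually)
    show "\<forall>\<^sub>F h in at 0. norm ((f (x + h) - f x) /\<^sub>R h - D) = norm (f (x + h) - f x - h *\<^sub>R D) / norm h"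
    proof -
      have "norm ((f (x + h) - f x) /\<^sub>R h - D) = norm (f (x + h) - f x - h *\<^sub>R D) / norm h"
        if "h \<noteq> 0" for h
      proof -
      have "(f (x + h) - f x) /\<^sub>R h - D = (f (x + h) - f x - h *\<^sub>R D) /\<^sub>R h"
        using that by (simp add: algebra_simps)
      then show ?thesis
        using that by (simp add: divide_inverse mult.commute)
      qed
      then show ?thesis unfolding eventually_at_filter by (auto intro!: always_eventually)
    qed
  qed
  then have "((\<lambda>y. norm (f y - f x - (y - x) *\<^sub>R D) / norm (y - x)) \<longlongrightarrow> 0) (at x)"
    using LIM_offset_zero_cancel[of "\<lambda>y. norm (f y - f x - (y - x) *\<^sub>R D) / norm (y - x)" x 0] by simp
  then show ?thesis
    unfolding has_vector_derivative_def has_derivative_iff_norm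
    by (auto intro: bounded_linear_scaleR_left)
qed

definition FT :: "(real \<Rightarrow> complex) \<Rightarrow> real \<Rightarrow> complex" where
  "FT f t = (LINT y|lborel. f y * cis (- (t * y)))"

lemma integrable_mult_cis:
  assumes "integrable lborel f" and that: "a \<in> borel_measurable borel"
  shows "integrable lborel (\<lambda>y. f y * cis (a y))"
proof (rule Bochner_Integration.integrable_bound[OF assms(1)])
  have [measurable]: "f \<in> borel_measurable borel" using assms by simp
  have [measurable]: "a \<in> borel_measurable borel" using that .
  have "continuous_on UNIV cis" by (auto simp: cis_conv_exp intro!: continuous_intros)
  then have [measurable]: "cis \<in> borel_measurable borel" by (rule borel_measurable_continuous_onI)
  show "(\<lambda>y. f y * cis (a y)) \<in> borel_measurable lborel" by measurable
  show "AE x in lborel. norm (f x * cis (a x)) \<le> norm (f x)" by (simp add: norm_mult)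
qed

lemma integrable_FT_integrand:
  "integrable lborel f \<Longrightarrow> integrable lborel (\<lambda>y. f y * cis (- (t * y)))"
  by (rule integrable_mult_cis) auto

lemma cis_approx: "norm (cis a - 1 - \<i> * a) \<le> a\<^sup>2 / 2"
  using iexp_approx1[of a 1] by (simp add: cis_conv_exp power2_eq_square algebra_simps)

lemma FT_deriv:
  assumes f: "integrable lborel f" and f1: "integrable lborel (\<lambda>y. complex_of_real y * f y)"
    and f2: "integrable lborel (\<lambda>y. complex_of_real y ^ 2 * f y)"
  shows "(FT f has_vector_derivative FT (\<lambda>y. - \<i> * (complex_of_real y * f y)) \<xi>) (at \<xi>)"
proof (rule vd_quot)
  define D where "D = FT (\<lambda>y. - \<i> * (complex_of_real y * f y)) \<xi>"
  define K where "K = (LINT y|lborel. norm (complex_of_real y ^ 2 * f y)) / 2"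
  have "((\<lambda>h. (FT f (\<xi> + h) - FT f \<xi>) /\<^sub>R h - D) \<longlongrightarrow> 0) (at 0)"
  proof (rule Lim_null_comparison)
    show "((\<lambda>h. \<bar>h\<bar> * K) \<longlongrightarrow> 0) (at 0)"
      by (intro tendsto_mult_left_zero tendsto_rabs_zero tendsto_ident_at)
    show "\<forall>\<^sub>F h in at 0. norm ((FT f (\<xi> + h) - FT f \<xi>) /\<^sub>R h - D) \<le> \<bar>h\<bar> * K"
    proof -
      have "norm ((FT f (\<xi> + h) - FT f \<xi>) /\<^sub>R h - D) \<le> \<bar>h\<bar> * K" if h: "h \<noteq> 0" for h
      proof -
        define q where "q y = f y * cis (- (\<xi> * y)) * ((cis (- (h * y)) - 1 - \<i> * (- (h * y))) / h)" for y
        have i1: "integrable lborel (\<lambda>y. f y * cis (- ((\<xi> + h) * y)))" by (rule integrable_FT_integrand[OF f])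
        have i2: "integrable lborel (\<lambda>y. f y * cis (- (\<xi> * y)))" by (rule integrable_FT_integrand[OF f])
        have i3: "integrable lborel (\<lambda>y. - \<i> * (complex_of_real y * f y) * cis (- (\<xi> * y)))"
          using integrable_FT_integrand[OF integrable_mult_right[OF f1, of "- \<i>"]] by simp
        have qe: "q y = (f y * cis (- ((\<xi> + h) * y)) - f y * cis (- (\<xi> * y))) / h
             - - \<i> * (complex_of_real y * f y) * cis (- (\<xi> * y))" for y
        proof -
          have "cis (- ((\<xi> + h) * y)) = cis (- (\<xi> * y)) * cis (- (h * y))"
            by (simp add: cis_mult distrib_right)
          then show ?thesis unfolding q_def using h by (simp add: field_simps)
        qed
        have "(FT f (\<xi> + h) - FT f \<xi>) /\<^sub>R h - D =
            (LINT y|lborel. (f y * cis (- ((\<xi> + h) * y)) - f y * cis (- (\<xi> * y))) / h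
             - - \<i> * (complex_of_real y * f y) * cis (- (\<xi> * y)))"
          unfolding FT_def D_def using i1 i2 i3
          by (simp add: scaleR_conv_of_real Bochner_Integration.integral_diff integral_divide_zero
                divide_inverse mult.commute)
        also have "\<dots> = (LINT y|lborel. q y)" by (simp add: qe)
        finally have eq: "(FT f (\<xi> + h) - FT f \<xi>) /\<^sub>R h - D = (LINT y|lborel. q y)" .
        have qb: "norm (q y) \<le> \<bar>h\<bar> * (norm (complex_of_real y ^ 2 * f y) / 2)" for y
        proof -
          have "norm (q y) = norm (f y) * (norm (cis (- (h * y)) - 1 - \<i> * (- (h * y))) / \<bar>h\<bar>)"
            unfolding q_def by (simp add: norm_mult norm_divide)
          also have "\<dots> \<le> norm (f y) * ((- (h * y))\<^sup>2 / 2 / \<bar>h\<bar>)"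
            by (intro mult_left_mono divide_right_mono cis_approx) auto
          also have "\<dots> = \<bar>h\<bar> * (norm (complex_of_real y ^ 2 * f y) / 2)"
            using h by (simp add: norm_mult power2_eq_square abs_mult field_simps)
          finally show ?thesis .
        qed
        have iq: "integrable lborel q"
        proof -
          have "q = (\<lambda>y. (f y * cis (- ((\<xi> + h) * y)) - f y * cis (- (\<xi> * y))) / h
             - - \<i> * (complex_of_real y * f y) * cis (- (\<xi> * y)))" using qe by auto
          then show ?thesis using i1 i2 i3 by simp
        qed
        have "norm (LINT y|lborel. q y) \<le> (LINT y|lborel. \<bar>h\<bar> * (norm (complex_of_real y ^ 2 * f y) / 2))"
          using qb iq integrable_norm[OF f2] by (intro Bochner_Integration.integral_norm_bound_integral) auto
        also have "\<dots> = \<bar>h\<bar> * K" unfolding K_def by simp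
        finally show ?thesis using eq by simp
      qed
      then show ?thesis unfolding eventually_at_filter by (auto intro!: always_eventually)
    qed
  qed
  then show "((\<lambda>h. (FT f (\<xi> + h) - FT f \<xi>) /\<^sub>R h) \<longlongrightarrow> FT (\<lambda>y. - \<i> * (complex_of_real y * f y)) \<xi>) (at 0)"
    unfolding D_def using Lim_null by blast
qed


lemma rd_tendsto:
  assumes "rd f" shows "(f \<longlongrightarrow> 0) at_top" "(f \<longlongrightarrow> 0) at_bot"
proof -
  obtain C where C: "\<forall>x. norm (f x) \<le> C * inverse (1 + x\<^sup>2)" using rd_bound[OF assms] by blast
  have l1: "((\<lambda>x::real. C * inverse (1 + x\<^sup>2)) \<longlongrightarrow> 0) at_top" by real_asymp
  have l2: "((\<lambda>x::real. C * inverse (1 + x\<^sup>2)) \<longlongrightarrow> 0) at_bot" by real_asymp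
  show "(f \<longlongrightarrow> 0) at_top"
    by (rule Lim_null_comparison[OF _ l1]) (use C in auto)
  show "(f \<longlongrightarrow> 0) at_bot"
    by (rule Lim_null_comparison[OF _ l2]) (use C in auto)
qed

lemma FTC_R:
  fixes f F :: "real \<Rightarrow> complex"
  assumes F: "\<And>x. (F has_vector_derivative f x) (at x)"
    and f: "\<And>x. isCont f x" and fi: "integrable lborel f"
    and t: "(F \<longlongrightarrow> 0) at_top" and b: "(F \<longlongrightarrow> 0) at_bot"
  shows "integral\<^sup>L lborel f = 0"
proof -
  have e: "einterval (-\<infinity>) \<infinity> = UNIV" by (auto simp: einterval_iff)
  have "(LBINT x=-\<infinity>..\<infinity>. f x) = 0 - 0"
    by (rule interval_integral_FTC_integrable[where F=F])
       (use F f fi t b in \<open>auto simp: e set_integrable_def ereal_tendsto_simps\<close>)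
  then show ?thesis by (simp add: interval_lebesgue_integral_def e set_lebesgue_integral_def)
qed

lemma has_vd_cis: "((\<lambda>y. cis (- (\<xi> * y))) has_vector_derivative (- \<i> * complex_of_real \<xi> * cis (- (\<xi> * y)))) (at y)"
proof -
  have d: "((\<lambda>y. - (\<xi> * y)) has_vector_derivative (- \<xi>)) (at y)"
    using has_real_derivative_iff_has_vector_derivative
    by (metis DERIV_cmult_Id DERIV_minus)
  have "((iexp \<circ> (\<lambda>y. - (\<xi> * y))) has_vector_derivative ((- \<xi>) *\<^sub>R (\<i> * iexp (- (\<xi> * y))))) (at y)"
    by (rule vector_diff_chain_at[OF d has_vector_derivative_iexp])
  then show ?thesis by (simp add: o_def cis_conv_exp scaleR_conv_of_real mult_ac)
qed

lemma cont_cis_lin: "isCont (\<lambda>y. cis (- (\<xi> * y))) y"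
  by (auto simp: cis_conv_exp intro!: continuous_intros)

lemma FT_vderiv:
  assumes u: "schwartz u"
  shows "FT (vderiv u) \<xi> = \<i> * complex_of_real \<xi> * FT u \<xi>"
proof -
  define p' where "p' y = vderiv u y * cis (- (\<xi> * y)) + u y * (- \<i> * complex_of_real \<xi> * cis (- (\<xi> * y)))" for y
  have du: "(u has_vector_derivative vderiv u y) (at y)" for y using schwartz_D2[OF u, of 0 y] by simp
  have dp: "((\<lambda>y. u y * cis (- (\<xi> * y))) has_vector_derivative p' y) (at y)" for y
    using has_vector_derivative_mult[OF du has_vd_cis] unfolding p'_def
    by (rule has_vector_derivative_eq_rhs) (simp add: algebra_simps)
  have iu: "integrable lborel u" by (rule schwartz_integrable0[OF u])
  have iu': "integrable lborel (vderiv u)" using schwartz_integrable[OF u, of 1] by simp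
  have i1: "integrable lborel (\<lambda>y. vderiv u y * cis (- (\<xi> * y)))" by (rule integrable_FT_integrand[OF iu'])
  have i2: "integrable lborel (\<lambda>y. u y * cis (- (\<xi> * y)))" by (rule integrable_FT_integrand[OF iu])
  have i2': "integrable lborel (\<lambda>y. u y * (- \<i> * complex_of_real \<xi> * cis (- (\<xi> * y))))"
    using integrable_mult_right[OF i2, of "- \<i> * complex_of_real \<xi>"] by (simp add: mult_ac)
  have cu: "isCont (vderiv u) y" "isCont u y" for y
    using schwartz_cont[OF u, of 1] schwartz_cont[OF u, of 0] by (auto simp: continuous_on_eq_continuous_at)
  have "integral\<^sup>L lborel p' = 0"
  proof (rule FTC_R[OF dp])
    show "isCont p' x" for x unfolding p'_def using cu by (auto intro!: continuous_intros cont_cis_lin)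
    show "integrable lborel p'" unfolding p'_def using i1 i2' by simp
    have rdu: "rd u" using schwartz_rd[OF u, of 0] by simp
    have nb: "norm (u y * cis (- (\<xi> * y))) = norm (u y)" for y by (simp add: norm_mult)
    show "((\<lambda>y. u y * cis (- (\<xi> * y))) \<longlongrightarrow> 0) at_top"
      using rd_tendsto(1)[OF rdu] by (subst tendsto_norm_zero_iff[symmetric]) (simp add: nb tendsto_norm_zero_iff)
    show "((\<lambda>y. u y * cis (- (\<xi> * y))) \<longlongrightarrow> 0) at_bot"
      using rd_tendsto(2)[OF rdu] by (subst tendsto_norm_zero_iff[symmetric]) (simp add: nb tendsto_norm_zero_iff)
  qed
  moreover have "integral\<^sup>L lborel p' = FT (vderiv u) \<xi> + (- \<i> * complex_of_real \<xi>) * FT u \<xi>"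
    unfolding p'_def FT_def using i1 i2 i2'
    by (simp add: Bochner_Integration.integral_add mult_ac)
  ultimately show ?thesis by (simp add: algebra_simps add_eq_0_iff)
qed

lemma FT_vderivs:
  assumes u: "schwartz u"
  shows "FT ((vderiv ^^ m) u) \<xi> = (\<i> * complex_of_real \<xi>) ^ m * FT u \<xi>"
proof (induction m)
  case 0 then show ?case by simp
next
  case (Suc m)
  have "FT ((vderiv ^^ Suc m) u) \<xi> = FT (vderiv ((vderiv ^^ m) u)) \<xi>" by simp
  also have "\<dots> = \<i> * complex_of_real \<xi> * FT ((vderiv ^^ m) u) \<xi>"
    by (rule FT_vderiv[OF schwartz_vderivs[OF u]])
  finally show ?case using Suc by simp
qed

lemma FT_norm_bound:
  assumes "integrable lborel f"
  shows "norm (FT f \<xi>) \<le> (LINT y|lborel. norm (f y))"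
  unfolding FT_def
  using Bochner_Integration.integral_norm_bound_integral[OF integrable_FT_integrand[OF assms] integrable_norm[OF assms]]
  by (simp add: norm_mult)

lemma schwartz_FT:
  assumes f: "schwartz f"
  shows "schwartz (FT f)"
proof -
  define g where "g n y = (- \<i>) ^ n * (complex_of_real y ^ n * f y)" for n y
  have sg: "schwartz (g n)" for n
    unfolding g_def by (intro schwartz_cmult schwartz_xpow f)
  have ig: "integrable lborel (g n)" for n by (rule schwartz_integrable0[OF sg])
  have ig1: "integrable lborel (\<lambda>y. complex_of_real y * g n y)" for n
    using schwartz_integrable0[OF schwartz_xpow[OF sg, of 1]] by simp
  have ig2: "integrable lborel (\<lambda>y. complex_of_real y ^ 2 * g n y)" for n
    using schwartz_integrable0[OF schwartz_xpow[OF sg, of 2]] by simp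
  have gs: "(\<lambda>y. - \<i> * (complex_of_real y * g n y)) = g (Suc n)" for n
    unfolding g_def by (auto simp: mult_ac)
  show ?thesis
  proof (rule schwartzI[where H="\<lambda>n. FT (g n)"])
    show "FT (g 0) = FT f" unfolding g_def by simp
    show "(FT (g n) has_vector_derivative FT (g (Suc n)) x) (at x)" for n x
      using FT_deriv[OF ig ig1 ig2, where \<xi>=x] gs by simp
    show "rd (FT (g n))" for n
      unfolding rd_def
    proof
      fix m
      show "\<exists>C. \<forall>x. norm (x ^ m *\<^sub>R FT (g n) x) \<le> C"
      proof (intro exI allI)
        fix x
        have "norm (x ^ m *\<^sub>R FT (g n) x) = norm ((\<i> * complex_of_real x) ^ m * FT (g n) x)"
          by (simp add: norm_mult norm_power power_abs)
        also have "\<dots> = norm (FT ((vderiv ^^ m) (g n)) x)" by (simp add: FT_vderivs[OF sg])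
        also have "\<dots> \<le> (LINT y|lborel. norm ((vderiv ^^ m) (g n) y))"
          by (rule FT_norm_bound[OF schwartz_integrable[OF sg]])
        finally show "norm (x ^ m *\<^sub>R FT (g n) x) \<le> (LINT y|lborel. norm ((vderiv ^^ m) (g n) y))" .
      qed
    qed
  qed
qed


lemma lip_vd:
  fixes f :: "real \<Rightarrow> complex"
  assumes "\<And>x. (f has_vector_derivative f' x) (at x)" "\<And>x. norm (f' x) \<le> B"
  shows "norm (f x - f y) \<le> B * \<bar>x - y\<bar>"
proof -
  have "norm (f x - f y) \<le> B * norm (x - y)"
  proof (rule differentiable_bound[where S=UNIV and f'="\<lambda>x h. h *\<^sub>R f' x"])
    show "(f has_derivative (\<lambda>h. h *\<^sub>R f' x)) (at x within UNIV)" for x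
      using assms(1)[of x] unfolding has_vector_derivative_def by simp
    show "onorm (\<lambda>h. h *\<^sub>R f' x) \<le> B" for x
      using onorm_scaleR_left[OF bounded_linear_ident, of "f' x"] assms(2)[of x] by (simp add: onorm_id)
  qed auto
  then show ?thesis by simp
qed

definition PVF :: "real \<Rightarrow> (real \<Rightarrow> complex) \<Rightarrow> real \<Rightarrow> complex" where
  "PVF c g \<epsilon> = (LINT w:{w. \<epsilon> < \<bar>w - c\<bar>}|lborel. g w / complex_of_real (w - c))"

lemma PV_PVF: "PV c g = Lim (at_right 0) (PVF c g)"
  unfolding PV_def PVF_def by simp

lemma integrable_boundI:
  fixes h :: "real \<Rightarrow> complex"
  assumes "h \<in> borel_measurable borel" "integrable lborel K" "\<And>w. norm (h w) \<le> K w"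
  shows "integrable lborel h"
proof (rule Bochner_Integration.integrable_bound[where f=K])
  show "AE x in lborel. norm (h x) \<le> norm (K x)"
  proof (rule AE_I2)
    fix x have "norm (h x) \<le> K x" by (rule assms(3))
    also have "K x \<le> norm (K x)" by simp
    finally show "norm (h x) \<le> norm (K x)" .
  qed
qed (use assms in auto)

lemma integrable_ind_Icc: "integrable lborel (\<lambda>w::real. (K::real) * indicator {a..b} w)"
proof -
  have "integrable lborel (indicator {a..b::real} :: real \<Rightarrow> real)"
    by (rule integrable_real_indicator) (auto simp: emeasure_lborel_Icc_eq)
  then show ?thesis by (rule integrable_mult_right)
qed

lemma integral_ind_Icc: "a \<le> b \<Longrightarrow> (LINT w::real|lborel. (K::real) * indicator {a..b} w) = K * (b - a)"
  by (simp add: integral_indicator measure_lborel_Icc)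

lemma PV_sym_zero:
  "(LINT w|lborel. indicator {w. \<epsilon> < \<bar>w - c\<bar> \<and> \<bar>w - c\<bar> \<le> 1} w *\<^sub>R (z / complex_of_real (w - c))) = 0"
  (is "?I = 0")
proof -
  let ?f = "\<lambda>w. indicator {w. \<epsilon> < \<bar>w - c\<bar> \<and> \<bar>w - c\<bar> \<le> 1} w *\<^sub>R (z / complex_of_real (w - c))"
  have "?I = \<bar>-1\<bar> *\<^sub>R (LINT w|lborel. ?f (2 * c + (-1) * w))"
    by (rule lborel_integral_real_affine) simp
  also have "(\<lambda>w. ?f (2 * c + (-1) * w)) = (\<lambda>w. - ?f w)"
  proof
    fix w
    have "\<bar>2 * c + - 1 * w - c\<bar> = \<bar>w - c\<bar>" by arith
    moreover have "complex_of_real (2 * c + - 1 * w - c) = - complex_of_real (w - c)" by simp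
    moreover have "z / - complex_of_real (w - c) = - (z / complex_of_real (w - c))"
      by (metis divide_minus_right)
    ultimately show "?f (2 * c + (-1) * w) = - ?f w"
      by (simp only: indicator_def) (simp del: of_real_diff)
  qed
  finally have "?I = - ?I" by simp
  then show ?thesis by simp
qed


lemma PV_conv:
  fixes g :: "real \<Rightarrow> complex"
  assumes gm: "g \<in> borel_measurable borel" and gi: "integrable lborel g"
    and lip: "\<And>x y. norm (g x - g y) \<le> L * \<bar>x - y\<bar>"
  shows "((PVF c g) \<longlongrightarrow> (LINT w|lborel. indicator {w. 1 < \<bar>w - c\<bar>} w *\<^sub>R (g w / complex_of_real (w - c)))
          + (LINT w|lborel. indicator {w. 0 < \<bar>w - c\<bar> \<and> \<bar>w - c\<bar> \<le> 1} w *\<^sub>R ((g w - g c) / complex_of_real (w - c)))) (at_right 0)"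
proof -
  have [measurable]: "g \<in> borel_measurable borel" by (rule gm)
  have L0: "0 \<le> L" using lip[of 0 1] by (metis abs_1 diff_0 abs_minus_cancel mult.right_neutral norm_ge_zero order_trans)
  define k where "k w = (g w - g c) / complex_of_real (w - c)" for w
  have [measurable]: "k \<in> borel_measurable borel" unfolding k_def by measurable
  have kb: "norm (k w) \<le> L" for w
  proof (cases "w = c")
    case True then show ?thesis using L0 by (simp add: k_def)
  next
    case False
    then have "norm (k w) = norm (g w - g c) / \<bar>w - c\<bar>" by (simp add: k_def norm_divide del: of_real_diff)
    also have "\<dots> \<le> L * \<bar>w - c\<bar> / \<bar>w - c\<bar>" using lip[of w c] by (intro divide_right_mono) auto
    finally show ?thesis using False by simp
  qed
  define B where "B = (LINT w|lborel. indicator {w. 1 < \<bar>w - c\<bar>} w *\<^sub>R (g w / complex_of_real (w - c)))"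
  define M where "M e = (LINT w|lborel. indicator {w. e < \<bar>w - c\<bar> \<and> \<bar>w - c\<bar> \<le> 1} w *\<^sub>R k w)" for e
  define N where "N e = (LINT w|lborel. indicator {w. 0 < \<bar>w - c\<bar> \<and> \<bar>w - c\<bar> \<le> e} w *\<^sub>R k w)" for e
  have intk: "integrable lborel (\<lambda>w. indicator {w. a < \<bar>w - c\<bar> \<and> \<bar>w - c\<bar> \<le> b} w *\<^sub>R k w)" for a b
  proof (rule integrable_boundI[where K="\<lambda>w. L * indicator {c - \<bar>b\<bar>..c + \<bar>b\<bar>} w"])
    show "(\<lambda>w. indicator {w. a < \<bar>w - c\<bar> \<and> \<bar>w - c\<bar> \<le> b} w *\<^sub>R k w) \<in> borel_measurable borel"
      by measurable
    show "integrable lborel (\<lambda>w. L * indicator {c - \<bar>b\<bar>..c + \<bar>b\<bar>} w)" by (rule integrable_ind_Icc)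
    show "norm (indicator {w. a < \<bar>w - c\<bar> \<and> \<bar>w - c\<bar> \<le> b} w *\<^sub>R k w) \<le> L * indicator {c - \<bar>b\<bar>..c + \<bar>b\<bar>} w" for w
      using kb[of w] L0 by (auto simp: indicator_def)
  qed
  have intB: "integrable lborel (\<lambda>w. indicator {w. 1 < \<bar>w - c\<bar>} w *\<^sub>R (g w / complex_of_real (w - c)))"
  proof (rule integrable_boundI[where K="\<lambda>w. norm (g w)"])
    show "(\<lambda>w. indicator {w. 1 < \<bar>w - c\<bar>} w *\<^sub>R (g w / complex_of_real (w - c))) \<in> borel_measurable borel"
      by measurable
    show "integrable lborel (\<lambda>w. norm (g w))" using gi by simp
    show "norm (indicator {w. 1 < \<bar>w - c\<bar>} w *\<^sub>R (g w / complex_of_real (w - c))) \<le> norm (g w)" for w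
    proof (cases "1 < \<bar>w - c\<bar>")
      case True
      then have "norm (g w) / \<bar>w - c\<bar> \<le> norm (g w) / 1" by (intro divide_left_mono) auto
      moreover have "norm (complex_of_real (w - c)) = \<bar>w - c\<bar>" by (rule norm_of_real)
      ultimately show ?thesis using True by (simp add: norm_divide del: of_real_diff)
    qed simp
  qed
  have intS: "integrable lborel (\<lambda>w. indicator {w. e < \<bar>w - c\<bar> \<and> \<bar>w - c\<bar> \<le> 1} w *\<^sub>R (g c / complex_of_real (w - c)))"
    if e: "0 < e" for e
  proof (rule integrable_boundI[where K="\<lambda>w. (norm (g c) / e) * indicator {c - 1..c + 1} w"])
    show "(\<lambda>w. indicator {w. e < \<bar>w - c\<bar> \<and> \<bar>w - c\<bar> \<le> 1} w *\<^sub>R (g c / complex_of_real (w - c))) \<in> borel_measurable borel"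
      by measurable
    show "integrable lborel (\<lambda>w. (norm (g c) / e) * indicator {c - 1..c + 1} w)" by (rule integrable_ind_Icc)
    show "norm (indicator {w. e < \<bar>w - c\<bar> \<and> \<bar>w - c\<bar> \<le> 1} w *\<^sub>R (g c / complex_of_real (w - c)))
        \<le> (norm (g c) / e) * indicator {c - 1..c + 1} w" for w
    proof (cases "e < \<bar>w - c\<bar> \<and> \<bar>w - c\<bar> \<le> 1")
      case True
      then have "norm (g c) / \<bar>w - c\<bar> \<le> norm (g c) / e" using e by (intro divide_left_mono) auto
      moreover have "norm (complex_of_real (w - c)) = \<bar>w - c\<bar>" by (rule norm_of_real)
      moreover have "w \<in> {c - 1..c + 1}" using True by auto
      ultimately show ?thesis using True
        by (simp add: norm_divide indicator_def del: of_real_diff)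
    next
      case False
      then have "indicator {w. e < \<bar>w - c\<bar> \<and> \<bar>w - c\<bar> \<le> 1} w = (0::real)" by (simp add: indicator_def)
      then show ?thesis using e by simp
    qed
  qed
  have eq: "PVF c g e = B + M 0 - N e" if e: "0 < e" "e < 1" for e
  proof -
    have "PVF c g e = (LINT w|lborel. indicator {w. 1 < \<bar>w - c\<bar>} w *\<^sub>R (g w / complex_of_real (w - c))
        + indicator {w. e < \<bar>w - c\<bar> \<and> \<bar>w - c\<bar> \<le> 1} w *\<^sub>R (g c / complex_of_real (w - c))
        + (indicator {w. 0 < \<bar>w - c\<bar> \<and> \<bar>w - c\<bar> \<le> 1} w *\<^sub>R k w
           - indicator {w. 0 < \<bar>w - c\<bar> \<and> \<bar>w - c\<bar> \<le> e} w *\<^sub>R k w))"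
      unfolding PVF_def set_lebesgue_integral_def
    proof (intro Bochner_Integration.integral_cong refl)
      fix w
      show "indicator {w. e < \<bar>w - c\<bar>} w *\<^sub>R (g w / complex_of_real (w - c)) =
         indicator {w. 1 < \<bar>w - c\<bar>} w *\<^sub>R (g w / complex_of_real (w - c))
        + indicator {w. e < \<bar>w - c\<bar> \<and> \<bar>w - c\<bar> \<le> 1} w *\<^sub>R (g c / complex_of_real (w - c))
        + (indicator {w. 0 < \<bar>w - c\<bar> \<and> \<bar>w - c\<bar> \<le> 1} w *\<^sub>R k w
           - indicator {w. 0 < \<bar>w - c\<bar> \<and> \<bar>w - c\<bar> \<le> e} w *\<^sub>R k w)"
      proof -
        have dd: "g w / complex_of_real (w - c) = g c / complex_of_real (w - c) + k w" if "w \<noteq> c"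
          unfolding k_def using that by (simp add: diff_divide_distrib)
        show ?thesis
        proof (cases "1 < \<bar>w - c\<bar>")
          case True then show ?thesis using e by (simp add: indicator_def)
        next
          case False
          show ?thesis
          proof (cases "e < \<bar>w - c\<bar>")
            case True then have "w \<noteq> c" using e by auto
            then show ?thesis using True False e dd by (simp add: indicator_def)
          next
            case F2: False
            then show ?thesis using False e by (simp add: indicator_def)
          qed
        qed
      qed
    qed
    also have "\<dots> = B + 0 + (M 0 - N e)"
      unfolding B_def M_def N_def
      apply (subst Bochner_Integration.integral_add[OF Bochner_Integration.integrable_add[OF intB intS[OF e(1)]] Bochner_Integration.integrable_diff[OF intk intk]])
      apply (subst Bochner_Integration.integral_add[OF intB intS[OF e(1)]])
      apply (subst Bochner_Integration.integral_diff[OF intk intk])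
      apply (subst PV_sym_zero)
      apply (rule refl)
      done
    finally show ?thesis by simp
  qed
  have Nb: "norm (N e) \<le> L * (2 * e)" if e: "0 < e" for e
  proof -
    have "norm (N e) \<le> (LINT w|lborel. L * indicator {c - e..c + e} w)"
      unfolding N_def
    proof (rule Bochner_Integration.integral_norm_bound_integral)
      show "integrable lborel (\<lambda>w. indicator {w. 0 < \<bar>w - c\<bar> \<and> \<bar>w - c\<bar> \<le> e} w *\<^sub>R k w)" by (rule intk)
      show "integrable lborel (\<lambda>w. L * indicator {c - e..c + e} w)" by (rule integrable_ind_Icc)
      show "norm (indicator {w. 0 < \<bar>w - c\<bar> \<and> \<bar>w - c\<bar> \<le> e} w *\<^sub>R k w) \<le> L * indicator {c - e..c + e} w" for w
        using kb[of w] L0 by (auto simp: indicator_def abs_le_iff)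
    qed
    also have "\<dots> = L * (2 * e)" using e by (simp add: integral_ind_Icc)
    finally show ?thesis .
  qed
  have "((\<lambda>e. B + M 0 - N e) \<longlongrightarrow> B + M 0 - 0) (at_right 0)"
  proof (intro tendsto_diff tendsto_const)
    show "(N \<longlongrightarrow> 0) (at_right 0)"
    proof (rule Lim_null_comparison[where g="\<lambda>e. L * (2 * e)"])
      show "\<forall>\<^sub>F x in at_right 0. norm (N x) \<le> L * (2 * x)"
        using Nb eventually_at_right_less by (metis (mono_tags, lifting) eventually_mono)
      show "((\<lambda>e. L * (2 * e)) \<longlongrightarrow> 0) (at_right 0)"
        by (rule tendsto_eq_intros tendsto_const tendsto_ident_at | simp)+
    qed
  qed
  then have "((\<lambda>e. B + M 0 - N e) \<longlongrightarrow> B + M 0) (at_right 0)" by simp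
  then have "(PVF c g \<longlongrightarrow> B + M 0) (at_right 0)"
  proof (rule Lim_transform_eventually)
    have "\<forall>\<^sub>F e in at_right 0. 0 < e \<and> e < (1::real)"
      by (auto simp: eventually_at_right_field intro!: exI[of _ 1])
    then show "\<forall>\<^sub>F e in at_right 0. B + M 0 - N e = PVF c g e"
      by (rule eventually_mono) (simp add: eq)
  qed
  then show ?thesis unfolding B_def M_def k_def by simp
qed


definition nice :: "(real \<Rightarrow> complex) \<Rightarrow> bool" where
  "nice g \<longleftrightarrow> g \<in> borel_measurable borel \<and> integrable lborel g \<and> (\<exists>L. \<forall>x y. norm (g x - g y) \<le> L * \<bar>x - y\<bar>)"

definition PVV :: "real \<Rightarrow> (real \<Rightarrow> complex) \<Rightarrow> complex" where
  "PVV c g = (LINT w|lborel. indicator {w. 1 < \<bar>w - c\<bar>} w *\<^sub>R (g w / complex_of_real (w - c)))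
          + (LINT w|lborel. indicator {w. 0 < \<bar>w - c\<bar> \<and> \<bar>w - c\<bar> \<le> 1} w *\<^sub>R ((g w - g c) / complex_of_real (w - c)))"

lemma nice_PVF_tendsto: "nice g \<Longrightarrow> (PVF c g \<longlongrightarrow> PVV c g) (at_right 0)"
  unfolding nice_def PVV_def using PV_conv by blast

lemma nice_PV: "nice g \<Longrightarrow> PV c g = PVV c g"
  unfolding PV_PVF by (rule tendsto_Lim) (auto intro: nice_PVF_tendsto)

lemma PVF_neg: "PVF c (\<lambda>w. - g w) e = - PVF c g e"
proof -
  have "(\<lambda>w. indicator {w. e < \<bar>w - c\<bar>} w *\<^sub>R (- g w / complex_of_real (w - c))) =
        (\<lambda>w. - (indicator {w. e < \<bar>w - c\<bar>} w *\<^sub>R (g w / complex_of_real (w - c))))"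
    by (rule ext) (simp add: indicator_def)
  then show ?thesis unfolding PVF_def set_lebesgue_integral_def
    by (simp only: Bochner_Integration.integral_minus)
qed

lemma nice_PV_neg: "nice g \<Longrightarrow> PV c (\<lambda>w. - g w) = - PV c g"
proof -
  assume g: "nice g"
  have "(PVF c (\<lambda>w. - g w) \<longlongrightarrow> - PVV c g) (at_right 0)"
    unfolding PVF_neg[abs_def] by (intro tendsto_minus nice_PVF_tendsto g)
  then have l1: "Lim (at_right 0) (PVF c (\<lambda>w. - g w)) = - PVV c g" by (intro tendsto_Lim) simp_all
  have l2: "Lim (at_right 0) (PVF c g) = PVV c g" by (intro tendsto_Lim nice_PVF_tendsto g) simp
  show ?thesis by (simp add: PV_PVF l1 l2)
qed

lemma PVF_integrable:
  assumes gm: "g \<in> borel_measurable borel" and gi: "integrable lborel g" and e: "0 < e"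
  shows "integrable lborel (\<lambda>w. indicator {w. e < \<bar>w - c\<bar>} w *\<^sub>R (g w / complex_of_real (w - c)))"
proof (rule integrable_boundI[where K="\<lambda>w. norm (g w) / e"])
  have [measurable]: "g \<in> borel_measurable borel" by (rule gm)
  show "(\<lambda>w. indicator {w. e < \<bar>w - c\<bar>} w *\<^sub>R (g w / complex_of_real (w - c))) \<in> borel_measurable borel"
    by measurable
  show "integrable lborel (\<lambda>w. norm (g w) / e)" using gi by simp
  show "norm (indicator {w. e < \<bar>w - c\<bar>} w *\<^sub>R (g w / complex_of_real (w - c))) \<le> norm (g w) / e" for w
  proof (cases "e < \<bar>w - c\<bar>")
    case True
    then have "norm (g w) / \<bar>w - c\<bar> \<le> norm (g w) / e" using e by (intro divide_left_mono) auto
    moreover have "norm (complex_of_real (w - c)) = \<bar>w - c\<bar>" by (rule norm_of_real)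
    ultimately show ?thesis using True by (simp add: norm_divide del: of_real_diff)
  qed (use e in simp)
qed

lemma PVF_lin:
  assumes "f \<in> borel_measurable borel" "integrable lborel f" "k \<in> borel_measurable borel" "integrable lborel k" "0 < e"
  shows "PVF c (\<lambda>w. a * f w + b * k w) e = a * PVF c f e + b * PVF c k e"
proof -
  have "(\<lambda>w. indicator {w. e < \<bar>w - c\<bar>} w *\<^sub>R ((a * f w + b * k w) / complex_of_real (w - c))) =
     (\<lambda>w. a * (indicator {w. e < \<bar>w - c\<bar>} w *\<^sub>R (f w / complex_of_real (w - c))) +
          b * (indicator {w. e < \<bar>w - c\<bar>} w *\<^sub>R (k w / complex_of_real (w - c))))"
    by (auto simp: add_divide_distrib indicator_def)
  then show ?thesis
    unfolding PVF_def set_lebesgue_integral_def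
    apply (simp only:)
    apply (subst Bochner_Integration.integral_add)
      apply (rule integrable_mult_right, rule PVF_integrable[OF assms(1,2,5)])
     apply (rule integrable_mult_right, rule PVF_integrable[OF assms(3,4,5)])
    apply (subst integral_mult_right_zero)+
    apply (rule refl)
    done
qed

lemma nice_PV_lin:
  assumes f: "nice f" and k: "nice k"
  shows "PV c (\<lambda>w. a * f w + b * k w) = a * PV c f + b * PV c k"
proof -
  have "((\<lambda>e. a * PVF c f e + b * PVF c k e) \<longlongrightarrow> a * PVV c f + b * PVV c k) (at_right 0)"
    by (intro tendsto_intros nice_PVF_tendsto f k)
  then have "(PVF c (\<lambda>w. a * f w + b * k w) \<longlongrightarrow> a * PVV c f + b * PVV c k) (at_right 0)"
  proof (rule Lim_transform_eventually)
    show "\<forall>\<^sub>F e in at_right 0. a * PVF c f e + b * PVF c k e = PVF c (\<lambda>w. a * f w + b * k w) e"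
      using eventually_at_right_less[of 0] 
      by (rule eventually_mono) (use f k in \<open>auto simp: nice_def PVF_lin\<close>)
  qed
  then have l1: "Lim (at_right 0) (PVF c (\<lambda>w. a * f w + b * k w)) = a * PVV c f + b * PVV c k"
    by (intro tendsto_Lim) simp_all
  have l2: "Lim (at_right 0) (PVF c f) = PVV c f" by (intro tendsto_Lim nice_PVF_tendsto f) simp
  have l3: "Lim (at_right 0) (PVF c k) = PVV c k" by (intro tendsto_Lim nice_PVF_tendsto k) simp
  show ?thesis by (simp add: PV_PVF l1 l2 l3)
qed

lemma schwartz_lip:
  assumes "schwartz f" shows "\<exists>L. \<forall>x y. norm (f x - f y) \<le> L * \<bar>x - y\<bar>"
proof -
  obtain B where B: "\<forall>x. norm ((vderiv ^^ 1) f x) \<le> B" using rd_bounded[OF schwartz_rd[OF assms]] by blast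
  have "norm (f x - f y) \<le> B * \<bar>x - y\<bar>" for x y
    by (rule lip_vd[where f'="vderiv f"]) (use schwartz_D2[OF assms, of 0] B in auto)
  then show ?thesis by blast
qed

lemma schwartz_nice: "schwartz f \<Longrightarrow> nice f"
  unfolding nice_def using schwartz_measurable schwartz_integrable0 schwartz_lip by blast


lemma lip_meas:
  fixes H :: "real \<Rightarrow> complex"
  assumes "\<And>x y. norm (H x - H y) \<le> L * \<bar>x - y\<bar>"
  shows "H \<in> borel_measurable borel"
proof -
  have L0: "0 \<le> L" using assms[of 1 0] by (metis abs_1 diff_zero mult.right_neutral norm_ge_zero order_trans)
  have "L-lipschitz_on UNIV H"
    by (rule lipschitz_onI) (use assms L0 in \<open>auto simp: dist_norm dist_real_def\<close>)
  then have "continuous_on UNIV H" by (rule lipschitz_on_continuous_on)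
  then show ?thesis by (rule borel_measurable_continuous_onI)
qed

lemma lip_vd_on:
  fixes f :: "real \<Rightarrow> complex"
  assumes S: "convex S" "x \<in> S" "y \<in> S"
    and d: "\<And>s. s \<in> S \<Longrightarrow> (f has_vector_derivative f' s) (at s)"
    and b: "\<And>s. s \<in> S \<Longrightarrow> norm (f' s) \<le> B"
  shows "norm (f x - f y) \<le> B * \<bar>x - y\<bar>"
proof -
  have "norm (f x - f y) \<le> B * norm (x - y)"
  proof (rule differentiable_bound[where S=S and f'="\<lambda>x h. h *\<^sub>R f' x"])
    show "(f has_derivative (\<lambda>h. h *\<^sub>R f' s)) (at s within S)" if "s \<in> S" for s
      using d[OF that] unfolding has_vector_derivative_def by (rule has_derivative_at_withinI)
    show "onorm (\<lambda>h. h *\<^sub>R f' s) \<le> B" if "s \<in> S" for s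
      using onorm_scaleR_left[OF bounded_linear_ident, of "f' s"] b[OF that] by (simp add: onorm_id)
  qed (use S in auto)
  then show ?thesis by simp
qed

lemma sq_compare: "\<bar>s - x\<bar> \<le> 1 \<Longrightarrow> 1 + x\<^sup>2 \<le> 3 * (1 + s\<^sup>2)" for s x :: real
proof -
  assume a: "\<bar>s - x\<bar> \<le> 1"
  have "(s - x)\<^sup>2 \<le> 1" using a by (metis abs_le_square_iff abs_one one_power2)
  moreover have "x\<^sup>2 \<le> 2 * s\<^sup>2 + 2 * (s - x)\<^sup>2"
  proof -
    have "0 \<le> (2 * s - x)\<^sup>2" by simp
    then show ?thesis unfolding power2_eq_square by (simp add: algebra_simps)
  qed
  moreover have "0 \<le> s\<^sup>2" by simp
  moreover have "\<And>a b c::real. c \<le> 1 \<Longrightarrow> a \<le> 2 * b + 2 * c \<Longrightarrow> 0 \<le> b \<Longrightarrow> 1 + a \<le> 3 * (1 + b)"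
    by (simp add: algebra_simps)
  ultimately show ?thesis by blast
qed

lemma b_local:
  fixes b :: "real \<Rightarrow> complex"
  assumes sb: "schwartz b" and C: "\<And>y. norm (vderiv b y) \<le> C * inverse (1 + y\<^sup>2)"
    and xx: "\<bar>x' - x\<bar> \<le> 1"
  shows "norm (b x' - b x) \<le> 3 * C * inverse (1 + x\<^sup>2) * \<bar>x' - x\<bar>"
proof (rule lip_vd_on[where S="{x - 1..x + 1}" and f'="vderiv b"])
  show "convex {x - 1..x + 1}" by simp
  show "x' \<in> {x - 1..x + 1}" "x \<in> {x - 1..x + 1}" using xx by auto
  show "(b has_vector_derivative vderiv b s) (at s)" for s using schwartz_D2[OF sb, of 0 s] by simp
  fix s assume s: "s \<in> {x - 1..x + 1}"
  have C0: "0 \<le> C" using C[of 0] by (metis inverse_1 mult.right_neutral norm_ge_zero order_trans power_zero_numeral add_0_right zero_power2)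
  have p: "0 < 1 + s\<^sup>2" "0 < 1 + x\<^sup>2" by (simp_all add: add_pos_nonneg)
  have "inverse (1 + s\<^sup>2) \<le> 3 * inverse (1 + x\<^sup>2)"
    using sq_compare[of s x] s p by (simp add: field_simps abs_le_iff)
  then have "C * inverse (1 + s\<^sup>2) \<le> C * (3 * inverse (1 + x\<^sup>2))" using C0 by (rule mult_left_mono)
  then show "norm (vderiv b s) \<le> 3 * C * inverse (1 + x\<^sup>2)" using C[of s] by simp
qed


lemma PVV_shift:
  "PVV d b = (LINT t|lborel. indicator {t. 1 < \<bar>t\<bar>} t *\<^sub>R (b (d + t) / complex_of_real t))
    + (LINT t|lborel. indicator {t. 0 < \<bar>t\<bar> \<and> \<bar>t\<bar> \<le> 1} t *\<^sub>R ((b (d + t) - b d) / complex_of_real t))"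
proof -
  have e1: "(LINT w|lborel. indicator {w. 1 < \<bar>w - d\<bar>} w *\<^sub>R (b w / complex_of_real (w - d))) =
      (LINT t|lborel. indicator {t. 1 < \<bar>t\<bar>} t *\<^sub>R (b (d + t) / complex_of_real t))"
    by (subst lborel_integral_real_affine[where c=1 and t=d]) (simp_all add: indicator_def)
  have e2: "(LINT w|lborel. indicator {w. 0 < \<bar>w - d\<bar> \<and> \<bar>w - d\<bar> \<le> 1} w *\<^sub>R ((b w - b d) / complex_of_real (w - d))) =
      (LINT t|lborel. indicator {t. 0 < \<bar>t\<bar> \<and> \<bar>t\<bar> \<le> 1} t *\<^sub>R ((b (d + t) - b d) / complex_of_real t))"
    by (subst lborel_integral_real_affine[where c=1 and t=d]) (simp_all add: indicator_def)
  show ?thesis unfolding PVV_def e1 e2 ..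
qed

lemma integral_shift: "(LINT t|lborel. (f (d + t) :: real)) = (LINT t|lborel. f t)" for d :: real
  by (subst lborel_integral_real_affine[where c=1 and t=d, of f]) simp_all

lemma integrable_shift: "integrable lborel f \<Longrightarrow> integrable lborel (\<lambda>t. f (d + t))"
  for f :: "real \<Rightarrow> 'a::{banach, second_countable_topology}"
  using lborel_integrable_real_affine[of f 1 d] by simp

lemma hilbert_bl:
  assumes sb: "schwartz b"
  shows "\<exists>M L. (\<forall>d. norm (PVV d b) \<le> M) \<and> (\<forall>d d'. norm (PVV d b - PVV d' b) \<le> L * \<bar>d - d'\<bar>)"
proof -
  obtain Lb where Lb: "\<And>x y. norm (b x - b y) \<le> Lb * \<bar>x - y\<bar>" using schwartz_lip[OF sb] by blast
  obtain Lb1 where Lb1: "\<And>x y. norm (vderiv b x - vderiv b y) \<le> Lb1 * \<bar>x - y\<bar>"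
    using schwartz_lip[OF schwartz_vderiv[OF sb]] by blast
  obtain C where C: "\<And>y. norm (vderiv b y) \<le> C * inverse (1 + y\<^sup>2)"
    using rd_bound[OF schwartz_rd[OF sb, of 1]] by auto
  have Lb0: "0 \<le> Lb" using Lb[of 1 0] by (metis abs_1 diff_zero mult.right_neutral norm_ge_zero order_trans)
  have Lb10: "0 \<le> Lb1" using Lb1[of 1 0] by (metis abs_1 diff_zero mult.right_neutral norm_ge_zero order_trans)
  have C0: "0 \<le> C" using C[of 0] by (metis inverse_1 mult.right_neutral norm_ge_zero order_trans power_zero_numeral add_0_right zero_power2)
  have bm[measurable]: "b \<in> borel_measurable borel" by (rule schwartz_measurable[OF sb])
  have bi: "integrable lborel b" by (rule schwartz_integrable0[OF sb])
  define X where "X d = (LINT t|lborel. indicator {t. 1 < \<bar>t\<bar>} t *\<^sub>R (b (d + t) / complex_of_real t))" for d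
  define Y where "Y d = (LINT t|lborel. indicator {t. 0 < \<bar>t\<bar> \<and> \<bar>t\<bar> \<le> 1} t *\<^sub>R ((b (d + t) - b d) / complex_of_real t))" for d
  have P: "PVV d b = X d + Y d" for d unfolding X_def Y_def by (rule PVV_shift)
  define Ib where "Ib = (LINT t::real|lborel. norm (b t))"
  define K0 where "K0 = (LINT t::real|lborel. inverse (1 + t\<^sup>2))"
  have iX: "integrable lborel (\<lambda>t. indicator {t. 1 < \<bar>t\<bar>} t *\<^sub>R (b (d + t) / complex_of_real t))" for d
  proof (rule integrable_boundI[where K="\<lambda>t. norm (b (d + t))"])
    show "(\<lambda>t. indicator {t. 1 < \<bar>t\<bar>} t *\<^sub>R (b (d + t) / complex_of_real t)) \<in> borel_measurable borel" by measurable
    show "integrable lborel (\<lambda>t. norm (b (d + t)))" using integrable_shift[OF integrable_norm[OF bi]] by simp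
    show "norm (indicator {t. 1 < \<bar>t\<bar>} t *\<^sub>R (b (d + t) / complex_of_real t)) \<le> norm (b (d + t))" for t
    proof (cases "1 < \<bar>t\<bar>")
      case True
      then have "norm (b (d + t)) / \<bar>t\<bar> \<le> norm (b (d + t)) / 1" by (intro divide_left_mono) auto
      then show ?thesis using True by (simp add: norm_divide)
    qed simp
  qed
  have iY: "integrable lborel (\<lambda>t. indicator {t. 0 < \<bar>t\<bar> \<and> \<bar>t\<bar> \<le> 1} t *\<^sub>R ((b (d + t) - b d) / complex_of_real t))" for d
  proof (rule integrable_boundI[where K="\<lambda>t. Lb * indicator {-1..1::real} t"])
    show "(\<lambda>t. indicator {t. 0 < \<bar>t\<bar> \<and> \<bar>t\<bar> \<le> 1} t *\<^sub>R ((b (d + t) - b d) / complex_of_real t)) \<in> borel_measurable borel"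
      by measurable
    show "integrable lborel (\<lambda>t. Lb * indicator {-1..1::real} t)" by (rule integrable_ind_Icc)
    show "norm (indicator {t. 0 < \<bar>t\<bar> \<and> \<bar>t\<bar> \<le> 1} t *\<^sub>R ((b (d + t) - b d) / complex_of_real t)) \<le> Lb * indicator {-1..1::real} t" for t
    proof (cases "0 < \<bar>t\<bar> \<and> \<bar>t\<bar> \<le> 1")
      case True
      have "norm (b (d + t) - b d) / \<bar>t\<bar> \<le> Lb * \<bar>t\<bar> / \<bar>t\<bar>" using Lb[of "d + t" d] by (intro divide_right_mono) auto
      then show ?thesis using True by (simp add: norm_divide indicator_def abs_le_iff)
    next
      case False
      then have "indicator {t. 0 < \<bar>t\<bar> \<and> \<bar>t\<bar> \<le> 1} t = (0::real)" by (simp add: indicator_def)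
      then show ?thesis using Lb0 by (simp add: indicator_pos_le)
    qed
  qed
  have Xb: "norm (X d) \<le> Ib" for d
  proof -
    have "norm (X d) \<le> (LINT t|lborel. norm (b (d + t)))" unfolding X_def
    proof (rule Bochner_Integration.integral_norm_bound_integral[OF iX])
      show "integrable lborel (\<lambda>t. norm (b (d + t)))" using integrable_shift[OF integrable_norm[OF bi]] by simp
      show "norm (indicator {t. 1 < \<bar>t\<bar>} t *\<^sub>R (b (d + t) / complex_of_real t)) \<le> norm (b (d + t))" for t
      proof (cases "1 < \<bar>t\<bar>")
        case True
        then have "norm (b (d + t)) / \<bar>t\<bar> \<le> norm (b (d + t)) / 1" by (intro divide_left_mono) auto
        then show ?thesis using True by (simp add: norm_divide)
      qed simp
    qed
    also have "\<dots> = Ib" unfolding Ib_def by (rule integral_shift[where f="\<lambda>t. norm (b t)"])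
    finally show ?thesis .
  qed
  have Yb: "norm (Y d) \<le> 2 * Lb" for d
  proof -
    have "norm (Y d) \<le> (LINT t|lborel. Lb * indicator {-1..1::real} t)" unfolding Y_def
    proof (rule Bochner_Integration.integral_norm_bound_integral[OF iY integrable_ind_Icc])
      show "norm (indicator {t. 0 < \<bar>t\<bar> \<and> \<bar>t\<bar> \<le> 1} t *\<^sub>R ((b (d + t) - b d) / complex_of_real t)) \<le> Lb * indicator {-1..1::real} t" for t
      proof (cases "0 < \<bar>t\<bar> \<and> \<bar>t\<bar> \<le> 1")
        case True
        have "norm (b (d + t) - b d) / \<bar>t\<bar> \<le> Lb * \<bar>t\<bar> / \<bar>t\<bar>" using Lb[of "d + t" d] by (intro divide_right_mono) auto
        then show ?thesis using True by (simp add: norm_divide indicator_def abs_le_iff)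
      next
        case False
        then have "indicator {t. 0 < \<bar>t\<bar> \<and> \<bar>t\<bar> \<le> 1} t = (0::real)" by (simp add: indicator_def)
        then show ?thesis using Lb0 by (simp add: indicator_pos_le)
      qed
    qed
    also have "\<dots> = 2 * Lb" by (simp add: integral_ind_Icc)
    finally show ?thesis .
  qed
  define M where "M = Ib + 2 * Lb"
  have Pb: "norm (PVV d b) \<le> M" for d
  proof -
    have "norm (PVV d b) \<le> norm (X d) + norm (Y d)" unfolding P by (rule norm_triangle_ineq)
    then show ?thesis unfolding M_def using Xb[of d] Yb[of d] by linarith
  qed
  have Xl: "norm (X d - X d') \<le> 3 * C * \<bar>d - d'\<bar> * K0" if dd: "\<bar>d - d'\<bar> \<le> 1" for d d'
  proof -
    have eqX: "X d - X d' = (LINT t|lborel. indicator {t. 1 < \<bar>t\<bar>} t *\<^sub>R (b (d + t) / complex_of_real t)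
         - indicator {t. 1 < \<bar>t\<bar>} t *\<^sub>R (b (d' + t) / complex_of_real t))"
      unfolding X_def by (rule Bochner_Integration.integral_diff[OF iX iX, symmetric])
    have "norm (X d - X d') \<le> (LINT t|lborel. 3 * C * \<bar>d - d'\<bar> * inverse (1 + (d' + t)\<^sup>2))"
      unfolding eqX
    proof (rule Bochner_Integration.integral_norm_bound_integral)
      show "integrable lborel (\<lambda>t. indicator {t. 1 < \<bar>t\<bar>} t *\<^sub>R (b (d + t) / complex_of_real t)
         - indicator {t. 1 < \<bar>t\<bar>} t *\<^sub>R (b (d' + t) / complex_of_real t))"
        by (rule Bochner_Integration.integrable_diff[OF iX iX])
      show "integrable lborel (\<lambda>t. 3 * C * \<bar>d - d'\<bar> * inverse (1 + (d' + t)\<^sup>2))"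
        using integrable_shift[OF integrable_inv_sq, of d'] by simp
      show "norm (indicator {t. 1 < \<bar>t\<bar>} t *\<^sub>R (b (d + t) / complex_of_real t)
         - indicator {t. 1 < \<bar>t\<bar>} t *\<^sub>R (b (d' + t) / complex_of_real t))
         \<le> 3 * C * \<bar>d - d'\<bar> * inverse (1 + (d' + t)\<^sup>2)" for t
      proof (cases "1 < \<bar>t\<bar>")
        case True
        have loc: "norm (b (d + t) - b (d' + t)) \<le> 3 * C * inverse (1 + (d' + t)\<^sup>2) * \<bar>(d + t) - (d' + t)\<bar>"
          by (rule b_local[OF sb C]) (use dd in simp)
        have "norm (b (d + t) / complex_of_real t - b (d' + t) / complex_of_real t)
            = norm (b (d + t) - b (d' + t)) / \<bar>t\<bar>"
        proof -
          have "b (d + t) / complex_of_real t - b (d' + t) / complex_of_real t = (b (d + t) - b (d' + t)) / complex_of_real t"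
            by (rule diff_divide_distrib[symmetric])
          then show ?thesis by (simp add: norm_divide)
        qed
        also have "\<dots> \<le> norm (b (d + t) - b (d' + t)) / 1" using True by (intro divide_left_mono) auto
        also have "\<dots> \<le> 3 * C * \<bar>d - d'\<bar> * inverse (1 + (d' + t)\<^sup>2)" using loc by (simp add: mult_ac)
        finally show ?thesis using True by simp
      next
        case False
        have "0 \<le> 3 * C * \<bar>d - d'\<bar> * inverse (1 + (d' + t)\<^sup>2)" using C0
          by (intro mult_nonneg_nonneg) (auto simp: add_nonneg_nonneg)
        then show ?thesis using False by simp
      qed
    qed
    also have "\<dots> = 3 * C * \<bar>d - d'\<bar> * K0"
      unfolding K0_def using integral_shift[where f="\<lambda>t. inverse (1 + t\<^sup>2)" and d=d'] by simp
    finally show ?thesis .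
  qed
  have Yl: "norm (Y d - Y d') \<le> 2 * Lb1 * \<bar>d - d'\<bar>" for d d'
  proof -
    have eqY: "Y d - Y d' = (LINT t|lborel. indicator {t. 0 < \<bar>t\<bar> \<and> \<bar>t\<bar> \<le> 1} t *\<^sub>R ((b (d + t) - b d) / complex_of_real t)
         - indicator {t. 0 < \<bar>t\<bar> \<and> \<bar>t\<bar> \<le> 1} t *\<^sub>R ((b (d' + t) - b d') / complex_of_real t))"
      unfolding Y_def by (rule Bochner_Integration.integral_diff[OF iY iY, symmetric])
    have "norm (Y d - Y d') \<le> (LINT t|lborel. (Lb1 * \<bar>d - d'\<bar>) * indicator {-1..1::real} t)"
      unfolding eqY
    proof (rule Bochner_Integration.integral_norm_bound_integral)
      show "integrable lborel (\<lambda>t. indicator {t. 0 < \<bar>t\<bar> \<and> \<bar>t\<bar> \<le> 1} t *\<^sub>R ((b (d + t) - b d) / complex_of_real t)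
         - indicator {t. 0 < \<bar>t\<bar> \<and> \<bar>t\<bar> \<le> 1} t *\<^sub>R ((b (d' + t) - b d') / complex_of_real t))"
        by (rule Bochner_Integration.integrable_diff[OF iY iY])
      show "integrable lborel (\<lambda>t. (Lb1 * \<bar>d - d'\<bar>) * indicator {-1..1::real} t)" by (rule integrable_ind_Icc)
      show "norm (indicator {t. 0 < \<bar>t\<bar> \<and> \<bar>t\<bar> \<le> 1} t *\<^sub>R ((b (d + t) - b d) / complex_of_real t)
         - indicator {t. 0 < \<bar>t\<bar> \<and> \<bar>t\<bar> \<le> 1} t *\<^sub>R ((b (d' + t) - b d') / complex_of_real t))
         \<le> (Lb1 * \<bar>d - d'\<bar>) * indicator {-1..1::real} t" for t
      proof (cases "0 < \<bar>t\<bar> \<and> \<bar>t\<bar> \<le> 1")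
        case True
        have dpsi: "((\<lambda>x. b (x + t) - b x) has_vector_derivative (vderiv b (x + t) - vderiv b x)) (at x)" for x
        proof -
          have "((\<lambda>x. x + t) has_real_derivative 1) (at x)" by (auto intro!: derivative_eq_intros)
          then have d1: "((\<lambda>x. x + t) has_vector_derivative 1) (at x)"
            by (simp add: has_real_derivative_iff_has_vector_derivative)
          have "((b \<circ> (\<lambda>x. x + t)) has_vector_derivative (1 *\<^sub>R vderiv b (x + t))) (at x)"
            by (rule vector_diff_chain_at[OF d1]) (use schwartz_D2[OF sb, of 0] in simp)
          then have "((\<lambda>x. b (x + t)) has_vector_derivative vderiv b (x + t)) (at x)" by (simp add: o_def)
          from has_vector_derivative_diff[OF this, of b "vderiv b x"]
          show ?thesis using schwartz_D2[OF sb, of 0 x] by simp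
        qed
        have N: "norm ((b (d + t) - b d) - (b (d' + t) - b d')) \<le> (Lb1 * \<bar>t\<bar>) * \<bar>d - d'\<bar>"
        proof (rule lip_vd[OF dpsi])
          fix x show "norm (vderiv b (x + t) - vderiv b x) \<le> Lb1 * \<bar>t\<bar>" using Lb1[of "x + t" x] by simp
        qed
        have E: "norm ((b (d + t) - b d) / complex_of_real t - (b (d' + t) - b d') / complex_of_real t)
            = norm ((b (d + t) - b d) - (b (d' + t) - b d')) / \<bar>t\<bar>"
        proof -
          have "(b (d + t) - b d) / complex_of_real t - (b (d' + t) - b d') / complex_of_real t = ((b (d + t) - b d) - (b (d' + t) - b d')) / complex_of_real t"
            by (rule diff_divide_distrib[symmetric])
          then show ?thesis by (simp add: norm_divide)
        qed
        have "norm ((b (d + t) - b d) / complex_of_real t - (b (d' + t) - b d') / complex_of_real t)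
            \<le> (Lb1 * \<bar>t\<bar>) * \<bar>d - d'\<bar> / \<bar>t\<bar>" unfolding E by (rule divide_right_mono[OF N]) simp
        also have "\<dots> = Lb1 * \<bar>d - d'\<bar>" using True by simp
        finally show ?thesis using True by (simp add: indicator_def abs_le_iff)
      next
        case False
        have "0 \<le> (Lb1 * \<bar>d - d'\<bar>) * indicator {-1..1::real} t" using Lb10 by (simp add: indicator_def)
        then show ?thesis using False by simp
      qed
    qed
    also have "\<dots> = 2 * Lb1 * \<bar>d - d'\<bar>" by (simp add: integral_ind_Icc)
    finally show ?thesis .
  qed
  define L where "L = 2 * M + 3 * C * K0 + 2 * Lb1"
  have K00: "0 \<le> K0" unfolding K0_def by (rule integral_nonneg_AE) (auto simp: add_nonneg_nonneg)
  have M0: "0 \<le> M" using Pb[of 0] by (meson norm_ge_zero order_trans)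
  have "norm (PVV d b - PVV d' b) \<le> L * \<bar>d - d'\<bar>" for d d'
  proof (cases "\<bar>d - d'\<bar> \<le> 1")
    case True
    have "norm (PVV d b - PVV d' b) = norm ((X d - X d') + (Y d - Y d'))" by (simp add: P algebra_simps)
    also have "\<dots> \<le> norm (X d - X d') + norm (Y d - Y d')" by (rule norm_triangle_ineq)
    also have "\<dots> \<le> 3 * C * \<bar>d - d'\<bar> * K0 + 2 * Lb1 * \<bar>d - d'\<bar>" using Xl[OF True] Yl[of d d'] by (rule add_mono)
    also have "\<dots> \<le> L * \<bar>d - d'\<bar>" unfolding L_def using M0 by (simp add: algebra_simps)
    finally show ?thesis .
  next
    case False
    have "norm (PVV d b - PVV d' b) \<le> norm (PVV d b) + norm (PVV d' b)" by (rule norm_triangle_ineq4)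
    also have "\<dots> \<le> 2 * M" using Pb[of d] Pb[of d'] by simp
    also have "\<dots> \<le> 2 * M * \<bar>d - d'\<bar>"
    proof -
      have "2 * M * 1 \<le> 2 * M * \<bar>d - d'\<bar>" using False M0 by (intro mult_left_mono) auto
      then show ?thesis by simp
    qed
    also have "\<dots> \<le> L * \<bar>d - d'\<bar>" unfolding L_def using C0 K00 Lb10 by (simp add: algebra_simps)
    finally show ?thesis .
  qed
  then show ?thesis using Pb by blast
qed


lemma tent_deriv1:
  assumes r: "r \<noteq> 0"
  shows "((\<lambda>k. \<i> / complex_of_real r * (complex_of_real (A - k) * cis (- (r * k))) - 1 / complex_of_real r ^ 2 * cis (- (r * k)))
     has_vector_derivative (complex_of_real (A - k) * cis (- (r * k)))) (at k)"
proof -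
  have d0: "((\<lambda>k. complex_of_real (A - k)) has_vector_derivative - 1) (at k)"
    using has_vector_derivative_of_real[of "\<lambda>k. A - k" "-1"] by (auto intro!: derivative_eq_intros)
  have "((\<lambda>k. \<i> / complex_of_real r * (complex_of_real (A - k) * cis (- (r * k))) - 1 / complex_of_real r ^ 2 * cis (- (r * k)))
     has_vector_derivative (\<i> / complex_of_real r * (complex_of_real (A - k) * (- \<i> * complex_of_real r * cis (- (r * k))) + (- 1) * cis (- (r * k)))
        - 1 / complex_of_real r ^ 2 * (- \<i> * complex_of_real r * cis (- (r * k))))) (at k)"
    by (intro has_vector_derivative_diff has_vector_derivative_mult_right has_vector_derivative_mult d0 has_vd_cis)
  then show ?thesis
    by (rule has_vector_derivative_eq_rhs) (use r in \<open>simp add: field_simps power2_eq_square\<close>)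
qed

lemma tent_deriv2:
  assumes r: "r \<noteq> 0"
  shows "((\<lambda>k. \<i> / complex_of_real r * (complex_of_real (A + k) * cis (- (r * k))) + 1 / complex_of_real r ^ 2 * cis (- (r * k)))
     has_vector_derivative (complex_of_real (A + k) * cis (- (r * k)))) (at k)"
proof -
  have d0: "((\<lambda>k. complex_of_real (A + k)) has_vector_derivative 1) (at k)"
    using has_vector_derivative_of_real[of "\<lambda>k. A + k" "1"] by (auto intro!: derivative_eq_intros)
  have "((\<lambda>k. \<i> / complex_of_real r * (complex_of_real (A + k) * cis (- (r * k))) + 1 / complex_of_real r ^ 2 * cis (- (r * k)))
     has_vector_derivative (\<i> / complex_of_real r * (complex_of_real (A + k) * (- \<i> * complex_of_real r * cis (- (r * k))) + 1 * cis (- (r * k)))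
        + 1 / complex_of_real r ^ 2 * (- \<i> * complex_of_real r * cis (- (r * k))))) (at k)"
    by (intro has_vector_derivative_add has_vector_derivative_mult_right has_vector_derivative_mult d0 has_vd_cis)
  then show ?thesis
    by (rule has_vector_derivative_eq_rhs) (use r in \<open>simp add: field_simps power2_eq_square\<close>)
qed

lemma tent_FT:
  assumes r: "r \<noteq> 0" and A: "0 \<le> A"
  shows "fourier (\<lambda>\<kappa>. complex_of_real (max 0 (A - \<bar>\<kappa>\<bar>))) r = complex_of_real (2 * (1 - cos (r * A)) / r\<^sup>2)"
proof -
  define f where "f k = complex_of_real (max 0 (A - \<bar>k\<bar>)) * cis (- (r * k))" for k
  define F1 where "F1 k = \<i> / complex_of_real r * (complex_of_real (A - k) * cis (- (r * k))) - 1 / complex_of_real r ^ 2 * cis (- (r * k))" for k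
  define F2 where "F2 k = \<i> / complex_of_real r * (complex_of_real (A + k) * cis (- (r * k))) + 1 / complex_of_real r ^ 2 * cis (- (r * k))" for k
  have cf: "isCont f x" for x unfolding f_def by (intro continuous_intros cont_cis_lin)
  have "fourier (\<lambda>\<kappa>. complex_of_real (max 0 (A - \<bar>\<kappa>\<bar>))) r = (LINT k|lborel. f k)"
    unfolding fourier_def f_def ..
  also have "\<dots> = (LINT k:{-A..A}|lborel. f k)"
    unfolding set_lebesgue_integral_def
    by (rule Bochner_Integration.integral_cong) (auto simp: f_def indicator_def)
  also have "\<dots> = (LBINT k=-A..A. f k)"
    using A by (subst interval_integral_Icc) auto
  also have "\<dots> = (LBINT k=-A..0. f k) + (LBINT k=0..A. f k)"
  proof (rule interval_integral_sum[symmetric])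
    have m1: "min (ereal (- A)) (min 0 (ereal A)) = ereal (-A)" and m2: "max (ereal (- A)) (max 0 (ereal A)) = ereal A"
      using A by (auto simp: min_def max_def)
    show "interval_lebesgue_integrable lborel (min (ereal (- A)) (min 0 (ereal A))) (max (ereal (- A)) (max 0 (ereal A))) f"
      unfolding m1 m2 by (rule interval_integrable_isCont) (rule cf)
  qed
  also have "(LBINT k=0..A. f k) = F1 A - F1 0"
    unfolding zero_ereal_def
  proof (rule interval_integral_FTC_finite)
    show "continuous_on {min 0 A..max 0 A} f" using cf by (simp add: continuous_at_imp_continuous_on)
    fix x assume x: "min 0 A \<le> x" "x \<le> max 0 A"
    have "(F1 has_vector_derivative (complex_of_real (A - x) * cis (- (r * x)))) (at x)"
      unfolding F1_def by (rule tent_deriv1[OF r])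
    moreover have "complex_of_real (A - x) * cis (- (r * x)) = f x" using x A by (simp add: f_def)
    ultimately show "(F1 has_vector_derivative f x) (at x within {min 0 A..max 0 A})"
      by (simp add: has_vector_derivative_at_within)
  qed
  also have "(LBINT k=-A..0. f k) = F2 0 - F2 (-A)"
    unfolding zero_ereal_def
  proof (rule interval_integral_FTC_finite)
    show "continuous_on {min (-A) 0..max (-A) 0} f" using cf by (simp add: continuous_at_imp_continuous_on)
    fix x assume x: "min (-A) 0 \<le> x" "x \<le> max (-A) 0"
    have "(F2 has_vector_derivative (complex_of_real (A + x) * cis (- (r * x)))) (at x)"
      unfolding F2_def by (rule tent_deriv2[OF r])
    moreover have "complex_of_real (A + x) * cis (- (r * x)) = f x" using x A by (simp add: f_def)
    ultimately show "(F2 has_vector_derivative f x) (at x within {min (-A) 0..max (-A) 0})"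
      by (simp add: has_vector_derivative_at_within)
  qed
  also have "F2 0 - F2 (-A) + (F1 A - F1 0) = complex_of_real (2 * (1 - cos (r * A)) / r\<^sup>2)"
    unfolding F1_def F2_def using r
    by (simp add: complex_eq_iff field_simps power2_eq_square cos_minus sin_minus)
  finally show ?thesis .
qed


lemma prod_integral:
  fixes f g :: "real \<Rightarrow> complex"
  assumes fm: "f \<in> borel_measurable borel" and gm: "g \<in> borel_measurable borel"
    and fi: "integrable lborel f" and gi: "integrable lborel g"
  shows "integrable (lborel :: (real \<times> real) measure) (\<lambda>y. f (fst y) * g (snd y))"
    and "(LINT y|(lborel :: (real \<times> real) measure). f (fst y) * g (snd y)) = (LINT x|lborel. f x) * (LINT x|lborel. g x)"
proof -
  have [measurable]: "f \<in> borel_measurable borel" "g \<in> borel_measurable borel" using fm gm by auto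
  have e: "(lborel :: (real \<times> real) measure) = lborel \<Otimes>\<^sub>M lborel" by (rule lborel_prod[symmetric])
  have m: "(\<lambda>y. f (fst y) * g (snd y)) \<in> borel_measurable (lborel \<Otimes>\<^sub>M (lborel::real measure))" by measurable
  have int: "integrable (lborel \<Otimes>\<^sub>M lborel) (\<lambda>y. f (fst y) * g (snd y))"
  proof (rule lborel_pair.Fubini_integrable[OF m])
    show "integrable lborel (\<lambda>x. LINT y|lborel. norm (f (fst (x, y)) * g (snd (x, y))))"
      using integrable_mult_left[OF integrable_norm[OF fi], of "LINT y|lborel. norm (g y)"]
      by (simp add: norm_mult)
    show "AE x in lborel. integrable lborel (\<lambda>y. f (fst (x, y)) * g (snd (x, y)))"
      using integrable_mult_right[OF gi] by simp
  qed
  then show "integrable (lborel :: (real \<times> real) measure) (\<lambda>y. f (fst y) * g (snd y))" by (simp add: e)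
  have "(LINT y|(lborel \<Otimes>\<^sub>M lborel). f (fst y) * g (snd y)) = (LINT x|lborel. (LINT y|lborel. f (fst (x, y)) * g (snd (x, y))))"
    by (rule lborel_pair.integral_fst'[OF int, symmetric])
  also have "\<dots> = (LINT x|lborel. f x * (LINT y|lborel. g y))" by simp
  also have "\<dots> = (LINT x|lborel. f x) * (LINT x|lborel. g x)" by simp
  finally show "(LINT y|(lborel :: (real \<times> real) measure). f (fst y) * g (snd y)) = (LINT x|lborel. f x) * (LINT x|lborel. g x)"
    by (simp add: e)
qed

lemma cos_cis: "complex_of_real (cos x) = (cis x + cis (- x)) / 2"
  by (simp add: complex_eq_iff)


lemma inner_pair_expand: "(w::real \<times> real) \<bullet> y = fst w * fst y + snd w * snd y"
  by (cases w; cases y) simp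

lemma schwartz_FT_meas: "schwartz h \<Longrightarrow> (\<lambda>t. h t * cis (- (a * t))) \<in> borel_measurable borel"
proof -
  assume h: "schwartz h"
  have [measurable]: "h \<in> borel_measurable borel" by (rule schwartz_measurable[OF h])
  have "continuous_on UNIV cis" by (auto simp: cis_conv_exp intro!: continuous_intros)
  then have [measurable]: "cis \<in> borel_measurable borel" by (rule borel_measurable_continuous_onI)
  show ?thesis by measurable
qed

lemma g_factor:
  assumes h1: "schwartz h1" and h2: "schwartz h2"
  shows "(LINT y|lborel. h1 (fst y) * h2 (snd y) * complex_of_real (cos (r * (w \<bullet> y)))) =
     (FT h1 (r * fst w) * FT h2 (r * snd w) + FT h1 (- (r * fst w)) * FT h2 (- (r * snd w))) / 2"
proof -
  define a where "a = r * fst w"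
  define b where "b = r * snd w"
  let ?f1 = "\<lambda>t. h1 t * cis (- (a * t))" and ?g1 = "\<lambda>t. h2 t * cis (- (b * t))"
  let ?f2 = "\<lambda>t. h1 t * cis (- ((- a) * t))" and ?g2 = "\<lambda>t. h2 t * cis (- ((- b) * t))"
  have i1: "integrable lborel ?f1" "integrable lborel ?g1" "integrable lborel ?f2" "integrable lborel ?g2"
    by (intro integrable_FT_integrand schwartz_integrable0 h1 h2)+
  have m1: "?f1 \<in> borel_measurable borel" "?g1 \<in> borel_measurable borel" "?f2 \<in> borel_measurable borel" "?g2 \<in> borel_measurable borel"
    by (intro schwartz_FT_meas h1 h2)+
  have pw: "h1 (fst y) * h2 (snd y) * complex_of_real (cos (r * (w \<bullet> y))) =
      (?f1 (fst y) * ?g1 (snd y) + ?f2 (fst y) * ?g2 (snd y)) / 2" for y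
  proof -
    have e: "r * (w \<bullet> y) = a * fst y + b * snd y" unfolding a_def b_def inner_pair_expand by (simp add: algebra_simps)
    have "cis (- (a * fst y)) * cis (- (b * snd y)) = cis (- (r * (w \<bullet> y)))" unfolding e by (simp add: cis_mult)
    moreover have "cis (- (- a * fst y)) * cis (- (- b * snd y)) = cis (r * (w \<bullet> y))" unfolding e by (simp add: cis_mult)
    ultimately show ?thesis unfolding cos_cis by (simp add: algebra_simps)
  qed
  have "(LINT y|lborel. h1 (fst y) * h2 (snd y) * complex_of_real (cos (r * (w \<bullet> y)))) =
      (LINT y|lborel. (?f1 (fst y) * ?g1 (snd y) + ?f2 (fst y) * ?g2 (snd y)) / 2)"
    by (simp only: pw)
  also have "\<dots> = ((LINT y|lborel. ?f1 (fst y) * ?g1 (snd y)) + (LINT y|lborel. ?f2 (fst y) * ?g2 (snd y))) / 2"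
    using prod_integral(1)[OF m1(1,2) i1(1,2)] prod_integral(1)[OF m1(3,4) i1(3,4)]
    by (simp add: Bochner_Integration.integral_add)
  also have "\<dots> = (FT h1 a * FT h2 b + FT h1 (- a) * FT h2 (- b)) / 2"
    unfolding prod_integral(2)[OF m1(1,2) i1(1,2)] prod_integral(2)[OF m1(3,4) i1(3,4)] FT_def ..
  finally show ?thesis unfolding a_def b_def .
qed

lemma h_meas:
  assumes h1: "schwartz h1" and h2: "schwartz h2"
  shows "(\<lambda>y::real\<times>real. h1 (fst y) * h2 (snd y)) \<in> borel_measurable borel"
proof -
  have c1: "continuous_on UNIV h1" using schwartz_cont[OF h1, of 0] by simp
  have c2: "continuous_on UNIV h2" using schwartz_cont[OF h2, of 0] by simp
  have "continuous_on UNIV (\<lambda>y::real\<times>real. h1 (fst y) * h2 (snd y))"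
    by (intro continuous_on_mult continuous_on_compose2[OF c1] continuous_on_compose2[OF c2] continuous_intros) auto
  then show ?thesis by (rule borel_measurable_continuous_onI)
qed

lemma h_int:
  assumes h1: "schwartz h1" and h2: "schwartz h2"
  shows "integrable lborel (\<lambda>y::real\<times>real. h1 (fst y) * h2 (snd y))"
  by (rule prod_integral(1)) (intro schwartz_measurable schwartz_integrable0 h1 h2)+

lemma hcos_int:
  assumes h1: "schwartz h1" and h2: "schwartz h2"
  shows "integrable lborel (\<lambda>y::real\<times>real. h1 (fst y) * h2 (snd y) * complex_of_real (cos (r * (w \<bullet> y))))"
proof (rule Bochner_Integration.integrable_bound[OF integrable_norm[OF h_int[OF h1 h2]]])
  have [measurable]: "(\<lambda>y::real\<times>real. h1 (fst y) * h2 (snd y)) \<in> borel_measurable borel" by (rule h_meas[OF h1 h2])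
  have "continuous_on UNIV (\<lambda>y::real\<times>real. complex_of_real (cos (r * (w \<bullet> y))))"
    by (intro continuous_intros)
  then have [measurable]: "(\<lambda>y::real\<times>real. complex_of_real (cos (r * (w \<bullet> y)))) \<in> borel_measurable borel"
    by (rule borel_measurable_continuous_onI)
  show "(\<lambda>y::real\<times>real. h1 (fst y) * h2 (snd y) * complex_of_real (cos (r * (w \<bullet> y)))) \<in> borel_measurable lborel"
    by measurable
  show "AE x in lborel. norm (h1 (fst x) * h2 (snd x) * complex_of_real (cos (r * (w \<bullet> x)))) \<le> norm (norm (h1 (fst x) * h2 (snd x)))"
    by (intro AE_I2) (simp add: norm_mult mult_left_le)
qed

lemma psi_formula:
  assumes r: "r \<noteq> 0" and h1: "schwartz h1" and h2: "schwartz h2"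
  shows "(LINT y|lborel. h1 (fst y) * h2 (snd y) * fourier (\<lambda>\<kappa>. complex_of_real (max 0 (\<bar>w \<bullet> y\<bar> - \<bar>\<kappa>\<bar>))) r)
    = complex_of_real (2 / r\<^sup>2) * (LINT y|lborel. h1 (fst y) * h2 (snd y))
      - complex_of_real (2 / r\<^sup>2) * (LINT y|lborel. h1 (fst y) * h2 (snd y) * complex_of_real (cos (r * (w \<bullet> y))))"
proof -
  have pw: "h1 (fst y) * h2 (snd y) * fourier (\<lambda>\<kappa>. complex_of_real (max 0 (\<bar>w \<bullet> y\<bar> - \<bar>\<kappa>\<bar>))) r =
    complex_of_real (2 / r\<^sup>2) * (h1 (fst y) * h2 (snd y)) - complex_of_real (2 / r\<^sup>2) * (h1 (fst y) * h2 (snd y) * complex_of_real (cos (r * (w \<bullet> y))))" for y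
  proof -
    have c: "cos (r * \<bar>w \<bullet> y\<bar>) = cos (r * (w \<bullet> y))"
      by (cases "0 \<le> w \<bullet> y") (simp_all add: abs_if)
    show ?thesis unfolding tent_FT[OF r abs_ge_zero] c by (simp add: algebra_simps diff_divide_distrib)
  qed
  show ?thesis unfolding pw
    using h_int[OF h1 h2] hcos_int[OF h1 h2, of r w]
    by (simp add: Bochner_Integration.integral_diff)
qed


lemma lip_nonneg: "(\<And>x y. norm (H x - H y) \<le> L * \<bar>x - y\<bar>) \<Longrightarrow> 0 \<le> L"
  for H :: "real \<Rightarrow> complex"
  by (metis abs_1 diff_zero mult.right_neutral norm_ge_zero order_trans)

lemma nice_add: assumes "nice f" "nice g" shows "nice (\<lambda>x. f x + g x)"
proof -
  obtain L1 where L1: "\<And>x y. norm (f x - f y) \<le> L1 * \<bar>x - y\<bar>" using assms(1) unfolding nice_def by blast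
  obtain L2 where L2: "\<And>x y. norm (g x - g y) \<le> L2 * \<bar>x - y\<bar>" using assms(2) unfolding nice_def by blast
  have "norm ((f x + g x) - (f y + g y)) \<le> (L1 + L2) * \<bar>x - y\<bar>" for x y
  proof -
    have "norm ((f x + g x) - (f y + g y)) \<le> norm (f x - f y) + norm (g x - g y)"
      by (metis add_diff_add norm_triangle_ineq)
    also have "\<dots> \<le> L1 * \<bar>x - y\<bar> + L2 * \<bar>x - y\<bar>" using L1 L2 by (rule add_mono)
    finally show ?thesis by (simp add: algebra_simps)
  qed
  then show ?thesis using assms unfolding nice_def by auto
qed

lemma nice_mult_bl:
  assumes a: "schwartz a" and M: "\<And>x. norm (H x) \<le> M" and L: "\<And>x y. norm (H x - H y) \<le> L * \<bar>x - y\<bar>"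
  shows "nice (\<lambda>x. a x * H x)"
proof -
  obtain Ba where Ba: "\<And>x. norm (a x) \<le> Ba" using rd_bounded[OF schwartz_rd[OF a, of 0]] by auto
  obtain La where La: "\<And>x y. norm (a x - a y) \<le> La * \<bar>x - y\<bar>" using schwartz_lip[OF a] by blast
  have am[measurable]: "a \<in> borel_measurable borel" by (rule schwartz_measurable[OF a])
  have Hm[measurable]: "H \<in> borel_measurable borel" by (rule lip_meas[OF L])
  have L0: "0 \<le> L" by (rule lip_nonneg[OF L])
  have M0: "0 \<le> M" using M[of 0] norm_ge_zero order_trans by blast
  have m: "(\<lambda>x. a x * H x) \<in> borel_measurable borel" by measurable
  have i: "integrable lborel (\<lambda>x. a x * H x)"
  proof (rule integrable_boundI[OF m, where K="\<lambda>x. M * norm (a x)"])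
    show "integrable lborel (\<lambda>x. M * norm (a x))" using schwartz_integrable0[OF a] by simp
    show "norm (a x * H x) \<le> M * norm (a x)" for x
      using mult_right_mono[OF M[of x] norm_ge_zero[of "a x"]] by (simp add: norm_mult mult.commute)
  qed
  have "norm (a x * H x - a y * H y) \<le> (Ba * L + La * M) * \<bar>x - y\<bar>" for x y
  proof -
    have "a x * H x - a y * H y = a x * (H x - H y) + (a x - a y) * H y" by (simp add: algebra_simps)
    then have "norm (a x * H x - a y * H y) \<le> norm (a x) * norm (H x - H y) + norm (a x - a y) * norm (H y)"
      by (metis norm_mult norm_triangle_ineq)
    also have "\<dots> \<le> Ba * (L * \<bar>x - y\<bar>) + (La * \<bar>x - y\<bar>) * M"
      using Ba[of 0] lip_nonneg[OF La] by (intro add_mono mult_mono Ba L La M) (auto simp: L0 intro: order_trans[OF norm_ge_zero])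
    finally show ?thesis by (simp add: algebra_simps)
  qed
  then show ?thesis using m i unfolding nice_def by blast
qed

lemma hilbert_diff:
  assumes b: "schwartz b"
  shows "\<exists>M L. (\<forall>x. norm (PVV (- x) b - PVV x b) \<le> M) \<and>
     (\<forall>x y. norm ((PVV (- x) b - PVV x b) - (PVV (- y) b - PVV y b)) \<le> L * \<bar>x - y\<bar>)"
proof -
  obtain M L where M: "\<And>d. norm (PVV d b) \<le> M" and L: "\<And>d d'. norm (PVV d b - PVV d' b) \<le> L * \<bar>d - d'\<bar>"
    using hilbert_bl[OF b] by blast
  have "norm (PVV (- x) b - PVV x b) \<le> 2 * M" for x
    using norm_triangle_ineq4[of "PVV (- x) b" "PVV x b"] M[of "-x"] M[of x] by simp
  moreover have "norm ((PVV (- x) b - PVV x b) - (PVV (- y) b - PVV y b)) \<le> (2 * L) * \<bar>x - y\<bar>" for x y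
  proof -
    have "norm ((PVV (- x) b - PVV x b) - (PVV (- y) b - PVV y b)) \<le> norm (PVV (- x) b - PVV (- y) b) + norm (PVV x b - PVV y b)"
      by (metis (no_types, lifting) diff_diff_eq2 diff_add_eq add_diff_eq norm_triangle_ineq4 diff_diff_add)
    also have "\<dots> \<le> L * \<bar>- x - - y\<bar> + L * \<bar>x - y\<bar>" by (rule add_mono[OF L L])
    also have "\<dots> = (2 * L) * \<bar>x - y\<bar>" by (simp add: abs_minus_commute)
    finally show ?thesis .
  qed
  ultimately show ?thesis by blast
qed

lemma I_nice:
  assumes a: "schwartz a" and b: "schwartz b"
  shows "nice (\<lambda>x. a x * (PVV (- x) b - PVV x b))"
proof -
  obtain M L where "\<forall>x. norm (PVV (- x) b - PVV x b) \<le> M"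
     "\<forall>x y. norm ((PVV (- x) b - PVV x b) - (PVV (- y) b - PVV y b)) \<le> L * \<bar>x - y\<bar>"
    using hilbert_diff[OF b] by blast
  then show ?thesis by (intro nice_mult_bl[OF a]) auto
qed

lemma schwartz_reflect: "schwartz f \<Longrightarrow> schwartz (\<lambda>x. f (- x))"
  using schwartz_scale[of f "-1"] by simp

lemma inv_prod_le: "0 \<le> a \<Longrightarrow> 0 \<le> b \<Longrightarrow> inverse (1 + a) * inverse (1 + b) \<le> inverse (1 + (a + b::real))"
proof -
  assume a: "0 \<le> a" and b: "0 \<le> b"
  have "1 + (a + b) \<le> (1 + a) * (1 + b)" using a b by (simp add: algebra_simps)
  then have "inverse ((1 + a) * (1 + b)) \<le> inverse (1 + (a + b))"
    using a b by (intro le_imp_inverse_le) auto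
  then show ?thesis by (simp add: mult.commute)
qed


theorem mainTheorem12:
  fixes h1 h2 :: "real \<Rightarrow> complex" and r :: real
    and h :: "real \<times> real \<Rightarrow> complex"
    and \<psi> \<theta> g :: "real \<times> real \<Rightarrow> complex"
  assumes "r \<noteq> 0" and "schwartz h1" and "schwartz h2"
    and "h = (\<lambda>y. h1 (fst y) * h2 (snd y))"
    and "\<psi> = (\<lambda>w. LINT y|lborel. h y *
               fourier (\<lambda>\<kappa>. complex_of_real (max 0 (\<bar>w \<bullet> y\<bar> - \<bar>\<kappa>\<bar>))) r)"
    and "\<theta> = (\<lambda>w. \<psi> w - Lim at_infinity \<psi>)"
    and "g = (\<lambda>w. complex_of_real (2 / r\<^sup>2) *
               (LINT y|lborel. h y * complex_of_real (cos (r * (w \<bullet> y)))))"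
  shows "(\<exists>L. (\<psi> \<longlongrightarrow> L) at_infinity) \<and> \<theta> \<in> Se_sep \<and>
         T2 \<theta> - \<theta> (0, 0) = complex_of_real (2 / r\<^sup>2) * (LINT y|lborel. h y) - T2 g"
proof -
  have r: "r \<noteq> 0" and h1: "schwartz h1" and h2: "schwartz h2" using assms(1-3) by auto
  note hdef = assms(4) and psidef = assms(5) and thetadef = assms(6) and gdef = assms(7)
  define A where "A = (\<lambda>t. FT h1 (r * t))"
  define B where "B = (\<lambda>t. FT h2 (r * t))"
  define c where "c = complex_of_real (1 / r\<^sup>2)"
  have sA: "schwartz A" unfolding A_def by (rule schwartz_scale[OF schwartz_FT[OF h1] r])
  have sB: "schwartz B" unfolding B_def by (rule schwartz_scale[OF schwartz_FT[OF h2] r])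
  have sA': "schwartz (\<lambda>t. A (- t))" by (rule schwartz_reflect[OF sA])
  have sB': "schwartz (\<lambda>t. B (- t))" by (rule schwartz_reflect[OF sB])
  have gform: "g w = c * (A (fst w) * B (snd w) + A (- fst w) * B (- snd w))" for w
  proof -
    have "g w = complex_of_real (2 / r\<^sup>2) *
        ((FT h1 (r * fst w) * FT h2 (r * snd w) + FT h1 (- (r * fst w)) * FT h2 (- (r * snd w))) / 2)"
      unfolding gdef hdef by (simp add: g_factor[OF h1 h2])
    also have "\<dots> = c * (A (fst w) * B (snd w) + A (- fst w) * B (- snd w))"
      unfolding c_def A_def B_def using r by (simp add: field_simps)
    finally show ?thesis .
  qed
  define L where "L = complex_of_real (2 / r\<^sup>2) * (LINT y|lborel. h y)"
  have psiform: "\<psi> w = L - g w" for w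
    unfolding psidef L_def gdef hdef using psi_formula[OF r h1 h2, of w] by simp
  have glim: "(g \<longlongrightarrow> 0) at_infinity"
  proof -
    obtain CA where CA: "\<And>t. norm (A t) \<le> CA * inverse (1 + t\<^sup>2)"
      using rd_bound[OF schwartz_rd[OF sA, of 0]] by auto
    obtain CB where CB: "\<And>t. norm (B t) \<le> CB * inverse (1 + t\<^sup>2)"
      using rd_bound[OF schwartz_rd[OF sB, of 0]] by auto
    have CA0: "0 \<le> CA" using CA[of 0] by (metis inverse_1 mult.right_neutral norm_ge_zero order_trans power_zero_numeral add_0_right zero_power2)
    have CB0: "0 \<le> CB" using CB[of 0] by (metis inverse_1 mult.right_neutral norm_ge_zero order_trans power_zero_numeral add_0_right zero_power2)
    define K where "K = 2 * norm c * CA * CB"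
    have pb: "norm (A x * B y) \<le> CA * CB * inverse (1 + (x\<^sup>2 + y\<^sup>2))" for x y
    proof -
      have "norm (A x * B y) \<le> (CA * inverse (1 + x\<^sup>2)) * (CB * inverse (1 + y\<^sup>2))"
        unfolding norm_mult by (intro mult_mono CA CB) (auto simp: CA0 add_nonneg_nonneg)
      also have "\<dots> = CA * CB * (inverse (1 + x\<^sup>2) * inverse (1 + y\<^sup>2))" by (simp add: mult_ac)
      also have "\<dots> \<le> CA * CB * inverse (1 + (x\<^sup>2 + y\<^sup>2))"
        by (intro mult_left_mono inv_prod_le) (auto simp: CA0 CB0)
      finally show ?thesis .
    qed
    have bnd: "norm (g w) \<le> K * inverse (1 + (norm w)\<^sup>2)" for w
    proof -
      obtain x y where w: "w = (x, y)" by (cases w)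
      have nw: "(norm w)\<^sup>2 = x\<^sup>2 + y\<^sup>2" unfolding w norm_Pair by simp
      have "norm (g w) \<le> norm c * (norm (A x * B y) + norm (A (- x) * B (- y)))"
        unfolding gform w fst_conv snd_conv norm_mult[of c]
        by (intro mult_left_mono) (simp_all add: norm_mult[symmetric] norm_triangle_ineq)
      also have "\<dots> \<le> norm c * (CA * CB * inverse (1 + (x\<^sup>2 + y\<^sup>2)) + CA * CB * inverse (1 + (x\<^sup>2 + y\<^sup>2)))"
        using pb[of x y] pb[of "-x" "-y"] by (intro mult_left_mono add_mono) auto
      also have "\<dots> = K * inverse (1 + (norm w)\<^sup>2)" unfolding K_def nw by (simp add: algebra_simps)
      finally show ?thesis .
    qed
    have l: "((\<lambda>x::real. K * inverse (1 + x\<^sup>2)) \<longlongrightarrow> 0) at_top" by real_asymp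
    have "((\<lambda>w::real\<times>real. K * inverse (1 + (norm w)\<^sup>2)) \<longlongrightarrow> 0) at_infinity"
      using filterlim_compose[OF l filterlim_norm_at_top] by simp
    then show ?thesis by (rule Lim_null_comparison[rotated]) (use bnd in auto)
  qed
  have psifun: "\<psi> = (\<lambda>w. L - g w)" using psiform by auto
  have psilim: "(\<psi> \<longlongrightarrow> L) at_infinity"
    unfolding psifun using tendsto_diff[OF tendsto_const[of L] glim] by simp
  have LimL: "Lim at_infinity \<psi> = L" by (rule tendsto_Lim[OF trivial_limit_at_infinity psilim])
  have thetaform: "\<theta> = (\<lambda>w. - g w)" unfolding thetadef LimL using psiform by auto
  have Se: "\<theta> \<in> Se_sep"
    unfolding Se_sep_def
  proof (intro CollectI exI conjI)
    show "\<forall>i<(1::nat). schwartz ((\<lambda>_. A) i) \<and> schwartz ((\<lambda>_. B) i)" using sA sB by auto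
    show "\<theta> = (\<lambda>w. \<Sum>i<(1::nat). (\<lambda>_. - c) i * ((\<lambda>_. A) i (fst w) * (\<lambda>_. B) i (snd w) + (\<lambda>_. A) i (- fst w) * (\<lambda>_. B) i (- snd w)))"
      unfolding thetaform by (rule ext) (simp add: gform lessThan_def)
  qed
  define B' where "B' = (\<lambda>t. B (- t))"
  define A' where "A' = (\<lambda>t. A (- t))"
  have sB'': "schwartz B'" unfolding B'_def by (rule sB')
  have sA'': "schwartz A'" unfolding A'_def by (rule sA')
  have gi1: "(\<lambda>w2. g (x, w2)) = (\<lambda>w2. (c * A x) * B w2 + (c * A (- x)) * B' w2)" for x
    by (rule ext) (simp add: gform B'_def algebra_simps)
  have gi2: "(\<lambda>w1. g (w1, x)) = (\<lambda>w1. (c * B x) * A w1 + (c * B (- x)) * A' w1)" for x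
    by (rule ext) (simp add: gform A'_def algebra_simps)
  have gs1: "schwartz (\<lambda>w2. g (x, w2))" for x
    unfolding gi1 by (intro schwartz_add schwartz_cmult sB sB'')
  have gs2: "schwartz (\<lambda>w1. g (w1, x))" for x
    unfolding gi2 by (intro schwartz_add schwartz_cmult sA sA'')
  have pv1: "PV d (\<lambda>w2. g (x, w2)) = (c * A x) * PVV d B + (c * A (- x)) * PVV d B'" for d x
    unfolding gi1 nice_PV_lin[OF schwartz_nice[OF sB] schwartz_nice[OF sB'']]
    by (simp add: nice_PV[OF schwartz_nice[OF sB]] nice_PV[OF schwartz_nice[OF sB'']])
  have pv2: "PV d (\<lambda>w1. g (w1, x)) = (c * B x) * PVV d A + (c * B (- x)) * PVV d A'" for d x
    unfolding gi2 nice_PV_lin[OF schwartz_nice[OF sA] schwartz_nice[OF sA'']]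
    by (simp add: nice_PV[OF schwartz_nice[OF sA]] nice_PV[OF schwartz_nice[OF sA'']])
  define I where "I = (\<lambda>w1. PV (- w1) (\<lambda>w2. g (w1, w2)) - PV w1 (\<lambda>w2. g (w1, w2)))"
  define J where "J = (\<lambda>w2. PV (- w2) (\<lambda>w1. g (w1, w2)) - PV w2 (\<lambda>w1. g (w1, w2)))"
  have Iform: "I = (\<lambda>x. (c * A x) * (PVV (- x) B - PVV x B) + (c * A (- x)) * (PVV (- x) B' - PVV x B'))"
    unfolding I_def pv1 by (rule ext) (simp add: algebra_simps)
  have Jform: "J = (\<lambda>x. (c * B x) * (PVV (- x) A - PVV x A) + (c * B (- x)) * (PVV (- x) A' - PVV x A'))"
    unfolding J_def pv2 by (rule ext) (simp add: algebra_simps)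
  have nI: "nice I" unfolding Iform
    by (intro nice_add I_nice schwartz_cmult sA sB sB'' sA'[unfolded A'_def[symmetric]])
       (simp add: A'_def sA')
  have nJ: "nice J" unfolding Jform
    by (intro nice_add I_nice schwartz_cmult sB sA sA'' sB'[unfolded B'_def[symmetric]])
       (simp add: B'_def sB')
  have neg1: "PV d (\<lambda>w2. \<theta> (x, w2)) = - PV d (\<lambda>w2. g (x, w2))" for d x
    using nice_PV_neg[OF schwartz_nice[OF gs1[of x]], of d] by (simp add: thetaform)
  have neg2: "PV d (\<lambda>w1. \<theta> (w1, x)) = - PV d (\<lambda>w1. g (w1, x))" for d x
    using nice_PV_neg[OF schwartz_nice[OF gs2[of x]], of d] by (simp add: thetaform)
  have tI: "(\<lambda>w1. PV (- w1) (\<lambda>w2. \<theta> (w1, w2)) - PV w1 (\<lambda>w2. \<theta> (w1, w2))) = (\<lambda>w1. - I w1)"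
    unfolding I_def neg1 by (rule ext) simp
  have tJ: "(\<lambda>w2. PV (- w2) (\<lambda>w1. \<theta> (w1, w2)) - PV w2 (\<lambda>w1. \<theta> (w1, w2))) = (\<lambda>w2. - J w2)"
    unfolding J_def neg2 by (rule ext) simp
  have T2g: "T2 g = complex_of_real (1 / (4 * pi\<^sup>2)) * ((PV (-1) I + PV 1 I) + (PV (-1) J + PV 1 J))"
    unfolding T2_def I_def J_def ..
  have T2t: "T2 \<theta> = complex_of_real (1 / (4 * pi\<^sup>2)) * ((PV (-1) (\<lambda>w1. - I w1) + PV 1 (\<lambda>w1. - I w1))
        + (PV (-1) (\<lambda>w2. - J w2) + PV 1 (\<lambda>w2. - J w2)))"
    unfolding T2_def tI tJ ..
  have T2neg: "T2 \<theta> = - T2 g"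
    unfolding T2t T2g nice_PV_neg[OF nI] nice_PV_neg[OF nJ] by (simp add: algebra_simps)
  have g0: "g (0, 0) = L" unfolding gdef L_def by (simp add: inner_pair_expand)
  have th0: "\<theta> (0, 0) = - L" using g0 by (simp add: thetaform)
  have "T2 \<theta> - \<theta> (0, 0) = complex_of_real (2 / r\<^sup>2) * (LINT y|lborel. h y) - T2 g"
    unfolding T2neg th0 L_def by simp
  then show ?thesis using psilim Se by blast
qed


end
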